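(* Let $\Gamma$ be a finite simplicial graph and let $v_1,v_2,v_3$ be three consecutive vertices of a path in $\Gamma$ with $d(v_1,v_3)=2$. Let $f$ be a conjugating automorphism of $A_\Gamma$ with $f(v_1)=v_1$. Then $f(v_2)$ is represented by a reduced word $wv_2w^{-1}$ with $w\in\langle\mathrm{lk}(v_1)\rangle$, and $f(v_3)$ is represented by a reduced word $xyv_3y^{-1}x^{-1}$ with $x\in\langle\mathrm{lk}(v_1)\rangle$ and $y\in\langle\mathrm{st}(v_2)\rangle$.
   Context: $A_\Gamma$ is the right-angled Artin group with generators $V\Gamma$ and relations $[a,b]=1$ for edges $\{a,b\}$. $\mathrm{lk}(v)$ is the subgraph induced by the neighbours of $v$, $\mathrm{st}(v)$ that induced by $\mathrm{lk}(v)\cup\{v\}$, and for a subgraph $S$, $\langle S\rangle$ is the subgroup generated by its vertices. A word is reduced if it has minimal length among words representing the same element. An automorphism is conjugating if it maps each vertex generator to a conjugate of itself. *)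

theory Defs
  imports "HOL-Algebra.Algebra"
begin

definition simplicial_graph :: "'v set \<Rightarrow> ('v \<Rightarrow> 'v \<Rightarrow> bool) \<Rightarrow> bool" where
  "simplicial_graph V E \<longleftrightarrow> finite V \<and> (\<forall>a b. E a b \<longrightarrow> a \<in> V \<and> b \<in> V \<and> a \<noteq> b \<and> E b a)"

definition walk :: "('v \<Rightarrow> 'v \<Rightarrow> bool) \<Rightarrow> 'v list \<Rightarrow> bool" where
  "walk E p \<longleftrightarrow> p \<noteq> [] \<and> (\<forall>i. Suc i < length p \<longrightarrow> E (p ! i) (p ! Suc i))"

text \<open>Combinatorial graph distance (number of edges of a shortest walk); only meaningful
for vertices of V joined by some walk.\<close>
definition graph_dist :: "'v set \<Rightarrow> ('v \<Rightarrow> 'v \<Rightarrow> bool) \<Rightarrow> 'v \<Rightarrow> 'v \<Rightarrow> nat" where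
  "graph_dist V E u v = (LEAST n. \<exists>p. walk E p \<and> set p \<subseteq> V \<and> hd p = u \<and> last p = v \<and> length p = Suc n)"

definition lk :: "'v set \<Rightarrow> ('v \<Rightarrow> 'v \<Rightarrow> bool) \<Rightarrow> 'v \<Rightarrow> 'v set" where
  "lk V E v = {u \<in> V. E v u}"

definition st :: "'v set \<Rightarrow> ('v \<Rightarrow> 'v \<Rightarrow> bool) \<Rightarrow> 'v \<Rightarrow> 'v set" where
  "st V E v = insert v (lk V E v)"

text \<open>Words: lists of letters (vertex, sign); sign True means v, False means v^-1.\<close>
type_synonym 'v word = "('v \<times> bool) list"

definition words :: "'v set \<Rightarrow> 'v word set" where
  "words V = lists (V \<times> UNIV)"

definition word_inv :: "'v word \<Rightarrow> 'v word" where
  "word_inv w = rev (map (\<lambda>(a, s). (a, \<not> s)) w)"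

inductive raag_step :: "('v \<Rightarrow> 'v \<Rightarrow> bool) \<Rightarrow> 'v word \<Rightarrow> 'v word \<Rightarrow> bool" for E where
  cancel: "raag_step E (xs @ [(a, s), (a, \<not> s)] @ ys) (xs @ ys)"
| commute: "E a b \<Longrightarrow> raag_step E (xs @ [(a, s), (b, t)] @ ys) (xs @ [(b, t), (a, s)] @ ys)"

definition raag_rel :: "'v set \<Rightarrow> ('v \<Rightarrow> 'v \<Rightarrow> bool) \<Rightarrow> ('v word \<times> 'v word) set" where
  "raag_rel V E = {(u, w). u \<in> words V \<and> w \<in> words V \<and> equivclp (raag_step E) u w}"

definition raag_class :: "'v set \<Rightarrow> ('v \<Rightarrow> 'v \<Rightarrow> bool) \<Rightarrow> 'v word \<Rightarrow> 'v word set" where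
  "raag_class V E w = raag_rel V E `` {w}"

definition RAAG :: "'v set \<Rightarrow> ('v \<Rightarrow> 'v \<Rightarrow> bool) \<Rightarrow> 'v word set monoid" where
  "RAAG V E = \<lparr> carrier = words V // raag_rel V E,
                monoid.mult = (\<lambda>A B. raag_class V E ((SOME u. u \<in> A) @ (SOME u. u \<in> B))),
                one = raag_class V E [] \<rparr>"

definition raag_gen :: "'v set \<Rightarrow> ('v \<Rightarrow> 'v \<Rightarrow> bool) \<Rightarrow> 'v \<Rightarrow> 'v word set" where
  "raag_gen V E v = raag_class V E [(v, True)]"

definition reduced :: "'v set \<Rightarrow> ('v \<Rightarrow> 'v \<Rightarrow> bool) \<Rightarrow> 'v word \<Rightarrow> bool" where
  "reduced V E w \<longleftrightarrow> w \<in> words V \<and> (\<forall>u. (w, u) \<in> raag_rel V E \<longrightarrow> length w \<le> length u)"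

definition conjugating_aut :: "'v set \<Rightarrow> ('v \<Rightarrow> 'v \<Rightarrow> bool) \<Rightarrow> ('v word set \<Rightarrow> 'v word set) \<Rightarrow> bool" where
  "conjugating_aut V E f \<longleftrightarrow> f \<in> iso (RAAG V E) (RAAG V E) \<and>
     (\<forall>v \<in> V. \<exists>g \<in> carrier (RAAG V E).
        f (raag_gen V E v) = g \<otimes>\<^bsub>RAAG V E\<^esub> raag_gen V E v \<otimes>\<^bsub>RAAG V E\<^esub> inv\<^bsub>RAAG V E\<^esub> g)"

end

theory Submission
  imports Defs "HOL-Library.Sublist"
begin

abbreviation eqv :: "('v \<Rightarrow> 'v \<Rightarrow> bool) \<Rightarrow> 'v word \<Rightarrow> 'v word \<Rightarrow> bool" where
  "eqv E \<equiv> equivclp (raag_step E)"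

lemma step_append:
  assumes "raag_step E u w" shows "raag_step E (p@u@q) (p@w@q)"
  using assms
proof cases
  case (cancel xs a s ys)
  then show ?thesis using raag_step.cancel[of E "p@xs" a s "ys@q"] by simp
next
  case (commute a b xs s t ys)
  then show ?thesis using raag_step.commute[of E a b "p@xs" s t "ys@q"] by simp
qed

lemma eqv_append: "eqv E u w \<Longrightarrow> eqv E (p@u@q) (p@w@q)"
proof (induction rule: equivclp_induct)
  case base then show ?case by simp
next
  case (step y z) then show ?case
    by (meson equivclp_into_equivclp step_append)
qed

lemma eqv_app2: "eqv E u u' \<Longrightarrow> eqv E w w' \<Longrightarrow> eqv E (u@w) (u'@w')"
  using eqv_append[of E u u' "[]" w] eqv_append[of E w w' u' "[]"] by (auto intro: equivclp_trans)

lemma word_inv_Nil[simp]: "word_inv [] = []" by (simp add: word_inv_def)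
lemma word_inv_append[simp]: "word_inv (u@w) = word_inv w @ word_inv u" by (simp add: word_inv_def)
lemma word_inv_Cons: "word_inv (x#w) = word_inv w @ [(fst x, \<not> snd x)]"
  by (cases x) (simp add: word_inv_def)
lemma word_inv_inv[simp]: "word_inv (word_inv w) = w"
  by (induction w) (auto simp: word_inv_def)
lemma length_word_inv[simp]: "length (word_inv w) = length w" by (simp add: word_inv_def)
lemma word_inv_single[simp]: "word_inv [(a,s)] = [(a, \<not> s)]" by (simp add: word_inv_def)

lemma words_append[simp]: "u @ w \<in> words V \<longleftrightarrow> u \<in> words V \<and> w \<in> words V"
  by (auto simp: words_def)
lemma words_Cons[simp]: "x # w \<in> words V \<longleftrightarrow> fst x \<in> V \<and> w \<in> words V"
  by (cases x) (auto simp: words_def)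
lemma words_Nil[simp]: "[] \<in> words V" by (simp add: words_def)
lemma words_iff: "w \<in> words V \<longleftrightarrow> (\<forall>x\<in>set w. fst x \<in> V)"
  by (auto simp: words_def)
lemma words_word_inv[simp]: "word_inv w \<in> words V \<longleftrightarrow> w \<in> words V"
  by (auto simp: words_iff word_inv_def)

lemma eqv_inv_r: "eqv E (w @ word_inv w) []"
proof (induction w)
  case Nil then show ?case by simp
next
  case (Cons x w)
  obtain a s where x: "x = (a,s)" by (cases x)
  have "eqv E ([x] @ (w @ word_inv w) @ [(a, \<not> s)]) ([x] @ [] @ [(a, \<not> s)])"
    using eqv_append[OF Cons] .
  moreover have "raag_step E ([] @ [(a,s),(a,\<not>s)] @ []) ([] @ [])"
    by (rule raag_step.cancel)
  ultimately show ?case using x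
    by (auto simp: word_inv_Cons intro: equivclp_trans)
qed

lemma eqv_inv_l: "eqv E (word_inv w @ w) []"
  using eqv_inv_r[of E "word_inv w"] by simp

lemma mem_class: "u \<in> raag_class V E w \<longleftrightarrow> u \<in> words V \<and> w \<in> words V \<and> eqv E w u"
  by (auto simp: raag_class_def raag_rel_def)

lemma class_eq: assumes u: "u \<in> words V" and w: "w \<in> words V" shows
   "raag_class V E u = raag_class V E w \<longleftrightarrow> eqv E u w"
proof
  assume h: "raag_class V E u = raag_class V E w"
  have "u \<in> raag_class V E u" using u by (simp add: mem_class)
  then have "u \<in> raag_class V E w" using h by simp
  then show "eqv E u w" by (simp add: mem_class equivclp_sym)
next
  assume h: "eqv E u w"
  show "raag_class V E u = raag_class V E w"
  proof (rule Set.set_eqI)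
    fix x
    have "eqv E u x \<longleftrightarrow> eqv E w x"
      using h equivclp_sym equivclp_trans by metis
    then show "x \<in> raag_class V E u \<longleftrightarrow> x \<in> raag_class V E w"
      using u w by (simp add: mem_class)
  qed
qed

lemma carrier_RAAG: "x \<in> carrier (RAAG V E) \<longleftrightarrow> (\<exists>w\<in>words V. x = raag_class V E w)"
  unfolding RAAG_def quotient_def raag_class_def by simp

lemma class_in_carrier: "w \<in> words V \<Longrightarrow> raag_class V E w \<in> carrier (RAAG V E)"
  by (auto simp: carrier_RAAG)

lemma mult_class: "u \<in> words V \<Longrightarrow> w \<in> words V \<Longrightarrow>
   raag_class V E u \<otimes>\<^bsub>RAAG V E\<^esub> raag_class V E w = raag_class V E (u @ w)"
proof -
  assume u: "u \<in> words V" and w: "w \<in> words V"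
  let ?u = "SOME x. x \<in> raag_class V E u" and ?w = "SOME x. x \<in> raag_class V E w"
  have "u \<in> raag_class V E u" using u by (simp add: mem_class)
  then have hu: "?u \<in> raag_class V E u" by (rule someI)
  have "w \<in> raag_class V E w" using w by (simp add: mem_class)
  then have hw: "?w \<in> raag_class V E w" by (rule someI)
  from hu hw have "?u \<in> words V" "?w \<in> words V" "eqv E u ?u" "eqv E w ?w"
    by (auto simp: mem_class)
  then have "raag_class V E (?u @ ?w) = raag_class V E (u @ w)"
    using u w by (subst class_eq) (auto intro: equivclp_sym eqv_app2)
  then show ?thesis by (simp add: RAAG_def)
qed

lemma one_RAAG: "\<one>\<^bsub>RAAG V E\<^esub> = raag_class V E []" by (simp add: RAAG_def)

lemma monoid_RAAG: "monoid (RAAG V E)"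
proof (rule monoidI)
  fix x y assume "x \<in> carrier (RAAG V E)" "y \<in> carrier (RAAG V E)"
  then show "x \<otimes>\<^bsub>RAAG V E\<^esub> y \<in> carrier (RAAG V E)"
    by (auto simp: carrier_RAAG mult_class)
next
  show "\<one>\<^bsub>RAAG V E\<^esub> \<in> carrier (RAAG V E)" by (auto simp: one_RAAG carrier_RAAG)
next
  fix x y z assume "x \<in> carrier (RAAG V E)" "y \<in> carrier (RAAG V E)" "z \<in> carrier (RAAG V E)"
  then show "x \<otimes>\<^bsub>RAAG V E\<^esub> y \<otimes>\<^bsub>RAAG V E\<^esub> z = x \<otimes>\<^bsub>RAAG V E\<^esub> (y \<otimes>\<^bsub>RAAG V E\<^esub> z)"
    by (auto simp: carrier_RAAG mult_class)
next
  fix x assume "x \<in> carrier (RAAG V E)"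
  then show "\<one>\<^bsub>RAAG V E\<^esub> \<otimes>\<^bsub>RAAG V E\<^esub> x = x"
    by (auto simp: carrier_RAAG mult_class one_RAAG)
next
  fix x assume "x \<in> carrier (RAAG V E)"
  then show "x \<otimes>\<^bsub>RAAG V E\<^esub> \<one>\<^bsub>RAAG V E\<^esub> = x"
    by (auto simp: carrier_RAAG mult_class one_RAAG)
qed

lemma inv_class: "w \<in> words V \<Longrightarrow> inv\<^bsub>RAAG V E\<^esub> (raag_class V E w) = raag_class V E (word_inv w)"
proof -
  assume w: "w \<in> words V"
  have "raag_class V E (word_inv w) = inv\<^bsub>RAAG V E\<^esub> (raag_class V E w)"
  proof (rule monoid.inv_unique'[OF monoid_RAAG])
    show "raag_class V E w \<in> carrier (RAAG V E)" "raag_class V E (word_inv w) \<in> carrier (RAAG V E)"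
      using w by (auto intro: class_in_carrier)
    show "raag_class V E w \<otimes>\<^bsub>RAAG V E\<^esub> raag_class V E (word_inv w) = \<one>\<^bsub>RAAG V E\<^esub>"
      using w by (simp add: mult_class one_RAAG class_eq eqv_inv_r)
    show "raag_class V E (word_inv w) \<otimes>\<^bsub>RAAG V E\<^esub> raag_class V E w = \<one>\<^bsub>RAAG V E\<^esub>"
      using w by (simp add: mult_class one_RAAG class_eq eqv_inv_l)
  qed
  then show ?thesis by simp
qed

lemma gen_class: "raag_gen V E v = raag_class V E [(v,True)]" by (simp add: raag_gen_def)

lemma class_in_generate:
  assumes "\<forall>x\<in>set w. fst x \<in> S" "S \<subseteq> V"
  shows "raag_class V E w \<in> generate (RAAG V E) (raag_gen V E ` S)"
  using assms(1)
proof (induction w)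
  case Nil then show ?case using generate.one[of "RAAG V E"] by (simp add: one_RAAG)
next
  case (Cons x w)
  obtain a s where x: "x = (a,s)" by (cases x)
  have a: "a \<in> S" "a \<in> V" using Cons.prems x assms(2) by auto
  have wV: "w \<in> words V" using Cons.prems assms(2) by (auto simp: words_iff)
  have g: "raag_class V E [(a,True)] \<in> generate (RAAG V E) (raag_gen V E ` S)"
    using a by (auto simp: gen_class intro!: generate.incl)
  have "raag_class V E [x] \<in> generate (RAAG V E) (raag_gen V E ` S)"
  proof (cases s)
    case True then show ?thesis using g x by simp
  next
    case False
    have "inv\<^bsub>RAAG V E\<^esub> raag_class V E [(a,True)] \<in> generate (RAAG V E) (raag_gen V E ` S)"
      using a by (auto simp: gen_class intro!: generate.inv)
    then show ?thesis using False x a by (simp add: inv_class)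
  qed
  then have "raag_class V E [x] \<otimes>\<^bsub>RAAG V E\<^esub> raag_class V E w \<in> generate (RAAG V E) (raag_gen V E ` S)"
    using Cons by (auto intro: generate.eng)
  then show ?case using wV a x by (simp add: mult_class)
qed

definition cstep :: "('v \<Rightarrow> 'v \<Rightarrow> bool) \<Rightarrow> 'v word \<Rightarrow> 'v word \<Rightarrow> bool" where
  "cstep E u w \<longleftrightarrow> (\<exists>k. Suc k < length u \<and> E (fst (u!k)) (fst (u!Suc k)) \<and> w = u[k := u!Suc k, Suc k := u!k])"

definition cp :: "('v \<Rightarrow> 'v \<Rightarrow> bool) \<Rightarrow> 'v word \<Rightarrow> nat \<Rightarrow> nat \<Rightarrow> bool" where
  "cp E w i j \<longleftrightarrow> i < j \<and> j < length w \<and> fst (w!j) = fst (w!i) \<and> snd (w!j) = (\<not> snd (w!i)) \<and>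
     (\<forall>k. i < k \<longrightarrow> k < j \<longrightarrow> E (fst (w!i)) (fst (w!k)))"

definition del2 :: "'a list \<Rightarrow> nat \<Rightarrow> nat \<Rightarrow> 'a list" where
  "del2 w i j = take i w @ take (j - Suc i) (drop (Suc i) w) @ drop (Suc j) w"

definition rstep :: "('v \<Rightarrow> 'v \<Rightarrow> bool) \<Rightarrow> 'v word \<Rightarrow> 'v word \<Rightarrow> bool" where
  "rstep E w w' \<longleftrightarrow> (\<exists>i j. cp E w i j \<and> w' = del2 w i j)"

definition irr :: "('v \<Rightarrow> 'v \<Rightarrow> bool) \<Rightarrow> 'v word \<Rightarrow> bool" where
  "irr E w \<longleftrightarrow> \<not> (\<exists>i j. cp E w i j)"

definition orig :: "nat \<Rightarrow> nat \<Rightarrow> nat \<Rightarrow> nat" where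
  "orig i j n = (if n < i then n else if n < j - 1 then Suc n else n + 2)"

definition adj :: "nat \<Rightarrow> nat \<Rightarrow> nat \<Rightarrow> nat" where
  "adj i j p = p - (if i < p then 1 else 0) - (if j < p then 1 else 0)"

lemma length_del2: "i < j \<Longrightarrow> j < length w \<Longrightarrow> length (del2 w i j) = length w - 2"
  by (simp add: del2_def)

lemma nth_del2: "i < j \<Longrightarrow> j < length w \<Longrightarrow> n < length w - 2 \<Longrightarrow> del2 w i j ! n = w ! orig i j n"
  by (auto simp: del2_def orig_def nth_append min_def)

lemma nth_swap: "Suc k < length u \<Longrightarrow>
  u[k := u!Suc k, Suc k := u!k] ! n = (if n = k then u!Suc k else if n = Suc k then u!k else u!n)"
  by (auto simp: nth_list_update)

locale rg =
  fixes E :: "'v \<Rightarrow> 'v \<Rightarrow> bool"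
  assumes irrefl: "\<not> E a a" and symm: "E a b \<Longrightarrow> E b a"
begin

lemma cstep_sym: "cstep E u w \<Longrightarrow> cstep E w u"
  unfolding cstep_def
  apply clarify
  subgoal for k
    apply (rule exI[of _ k])
    apply (auto simp: nth_list_update symm)
    by (metis list_update_id list_update_overwrite list_update_swap n_not_Suc_n)
  done

lemma cstep_length: "cstep E u w \<Longrightarrow> length w = length u"
  by (auto simp: cstep_def)

lemma cstep_rstep:
  assumes c: "cstep E u u1" and r: "rstep E u u2"
  shows "\<exists>u2'. rstep E u1 u2' \<and> (u2' = u2 \<or> cstep E u2 u2')"
proof -
  obtain k where k: "Suc k < length u" "E (fst (u!k)) (fst (u!Suc k))"
    and u1: "u1 = u[k := u!Suc k, Suc k := u!k]" using c by (auto simp: cstep_def)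
  obtain i j where ij: "cp E u i j" and u2: "u2 = del2 u i j" using r by (auto simp: rstep_def)
  have L: "length u1 = length u" using u1 by simp
  have n1: "\<And>n. u1 ! n = (if n = k then u!Suc k else if n = Suc k then u!k else u!n)"
    using u1 k(1) nth_swap by metis
  from ij have ij': "i < j" "j < length u" "fst (u!j) = fst (u!i)" "snd (u!j) = (\<not> snd (u!i))"
    "\<And>m. i < m \<Longrightarrow> m < j \<Longrightarrow> E (fst (u!i)) (fst (u!m))" by (auto simp: cp_def)
  consider (a) "k = i" | (b) "Suc k = i" | (c) "k = j" | (d) "Suc k = j" "k \<noteq> i"
    | (e) "k \<noteq> i" "Suc k \<noteq> i" "k \<noteq> j" "Suc k \<noteq> j" by blast
  then show ?thesis
  proof cases
    case a
    have "Suc k \<noteq> j" using k(2) ij' a irrefl by metis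
    then have "Suc i < j" using a ij' by simp
    have cp1: "cp E u1 (Suc i) j"
      using ij' a \<open>Suc i < j\<close> k L unfolding cp_def n1 by (auto simp: symm)
    have "del2 u1 (Suc i) j = u2"
      unfolding u2 using ij' \<open>Suc i < j\<close> L a
      by (intro nth_equalityI) (auto simp: length_del2 nth_del2 n1 orig_def)
    then show ?thesis using cp1 by (auto simp: rstep_def)
  next
    case b
    have cp1: "cp E u1 k j"
      using ij' b k L unfolding cp_def n1 by (auto simp: symm)
    have "del2 u1 k j = u2"
      unfolding u2 using ij' L b
      by (intro nth_equalityI) (auto simp: length_del2 nth_del2 n1 orig_def less_Suc_eq)
    then show ?thesis using cp1 by (auto simp: rstep_def)
  next
    case c
    have cp1: "cp E u1 i (Suc j)"
      using ij' c k L unfolding cp_def n1 by (auto simp: symm)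
    have "del2 u1 i (Suc j) = u2"
      unfolding u2 using ij' L c k
      by (intro nth_equalityI) (auto simp: length_del2 nth_del2 n1 orig_def)
    then show ?thesis using cp1 by (auto simp: rstep_def)
  next
    case d
    have "i < k" using d ij' by simp
    have cp1: "cp E u1 i k"
      using ij' d k L \<open>i < k\<close> unfolding cp_def n1 by (auto simp: symm)
    have "del2 u1 i k = u2"
      unfolding u2 using ij' L d k
      by (intro nth_equalityI) (auto simp: length_del2 nth_del2 n1 orig_def)
    then show ?thesis using cp1 by (auto simp: rstep_def)
  next
    case e
    have cp1: "cp E u1 i j"
      using ij' e k L unfolding cp_def n1 by auto
    define k' where "k' = adj i j k"
    have lk: "Suc k' < length u2" using e ij' k unfolding k'_def adj_def u2
      by (auto simp: length_del2)
    have o1: "orig i j k' = k" "orig i j (Suc k') = Suc k" using e ij' unfolding k'_def adj_def orig_def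
      by auto
    have eq: "del2 u1 i j = u2[k' := u2!Suc k', Suc k' := u2!k']"
    proof (rule nth_equalityI)
      show "length (del2 u1 i j) = length (u2[k' := u2 ! Suc k', Suc k' := u2 ! k'])"
        using ij' L u2 by (simp add: length_del2)
    next
      fix n assume "n < length (del2 u1 i j)"
      then have n: "n < length u - 2" using ij' L by (simp add: length_del2)
      have "orig i j n = k \<longleftrightarrow> n = k'" "orig i j n = Suc k \<longleftrightarrow> n = Suc k'"
        using e ij' unfolding k'_def adj_def orig_def by auto
      then show "del2 u1 i j ! n = u2[k' := u2 ! Suc k', Suc k' := u2 ! k'] ! n"
        using n lk ij' L o1 unfolding u2
        by (auto simp: nth_del2 n1 nth_swap length_del2)
    qed
    have "cstep E u2 (del2 u1 i j)"
      unfolding cstep_def using lk eq o1 k ij' unfolding u2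
      by (auto simp: nth_del2 length_del2 intro!: exI[of _ k'])
    then show ?thesis using cp1 by (auto simp: rstep_def)
  qed
qed


end

lemma orig_adj: "i < j \<Longrightarrow> p \<noteq> i \<Longrightarrow> p \<noteq> j \<Longrightarrow> orig i j (adj i j p) = p"
  unfolding orig_def adj_def by (simp split: if_split if_split_asm; arith)

lemma adj_lt: "i < j \<Longrightarrow> j < len \<Longrightarrow> p < len \<Longrightarrow> p \<noteq> i \<Longrightarrow> p \<noteq> j \<Longrightarrow> adj i j p < len - 2"
  unfolding adj_def by (simp split: if_split if_split_asm; arith)

lemma orig_lt: "i < j \<Longrightarrow> j < len \<Longrightarrow> n < len - 2 \<Longrightarrow> orig i j n < len"
  unfolding orig_def by (simp split: if_split if_split_asm; arith)

lemma orig_ne: "i < j \<Longrightarrow> orig i j n \<noteq> i \<and> orig i j n \<noteq> j"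
  unfolding orig_def by (simp split: if_split if_split_asm; arith)

lemma orig_gt: "i < j \<Longrightarrow> k \<noteq> i \<Longrightarrow> k \<noteq> j \<Longrightarrow> adj i j k < n \<Longrightarrow> k < orig i j n"
  unfolding orig_def adj_def by (simp split: if_split if_split_asm; arith)

lemma orig_less: "i < j \<Longrightarrow> k \<noteq> i \<Longrightarrow> k \<noteq> j \<Longrightarrow> n < adj i j k \<Longrightarrow> orig i j n < k"
  unfolding orig_def adj_def by (simp split: if_split if_split_asm; arith)

lemma adj_mono: "i < j \<Longrightarrow> k \<noteq> i \<Longrightarrow> k \<noteq> j \<Longrightarrow> l \<noteq> i \<Longrightarrow> l \<noteq> j \<Longrightarrow> k < l \<Longrightarrow> adj i j k < adj i j l"
  unfolding adj_def by (simp split: if_split if_split_asm; arith)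

lemma orig_alt: "orig i j n = (if n < i then n else if Suc n < j then Suc n else Suc (Suc n))"
  unfolding orig_def by auto

lemma idx: assumes "i < j" "k < l" "k \<noteq> i" "k \<noteq> j" "l \<noteq> i" "l \<noteq> j" shows
  "orig i j (orig (adj i j k) (adj i j l) n) = orig k l (orig (adj k l i) (adj k l j) n)"
proof (cases "j < k")
  case 1: True
  then have a: "adj i j k = k - 2" "adj i j l = l - 2" "adj k l i = i" "adj k l j = j" using assms by (auto simp: adj_def)
  show ?thesis using assms(1,2) 1 unfolding orig_alt a by (simp split: if_split; arith)
next
  case False
  then have kj: "k < j" using assms by linarith
  show ?thesis
  proof (cases "i < k")
    case True
    show ?thesis
    proof (cases "j < l")
      case 2: True
      then have a: "adj i j k = k - 1" "adj i j l = l - 2" "adj k l i = i" "adj k l j = j - 1" using assms kj \<open>i < k\<close> by (auto simp: adj_def)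
      show ?thesis using assms(1,2) 2 kj \<open>i < k\<close> unfolding orig_alt a by (simp split: if_split; arith)
    next
      case False
      then have 3: "l < j" using assms by linarith
      then have a: "adj i j k = k - 1" "adj i j l = l - 1" "adj k l i = i" "adj k l j = j - 2" using assms kj \<open>i < k\<close> by (auto simp: adj_def)
      show ?thesis using assms(1,2) 3 kj \<open>i < k\<close> unfolding orig_alt a by (simp split: if_split; arith)
    qed
  next
    case False
    then have ki: "k < i" using assms by linarith
    show ?thesis
    proof (cases "l < i")
      case 4: True
      then have a: "adj i j k = k" "adj i j l = l" "adj k l i = i - 2" "adj k l j = j - 2" using assms ki by (auto simp: adj_def)
      show ?thesis using assms(1,2) 4 ki unfolding orig_alt a by (simp split: if_split; arith)
    next
      case False
      then have il: "i < l" using assms by linarith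
      show ?thesis
      proof (cases "l < j")
        case 5: True
        then have a: "adj i j k = k" "adj i j l = l - 1" "adj k l i = i - 1" "adj k l j = j - 2" using assms ki il by (auto simp: adj_def)
        show ?thesis using assms(1,2) 5 ki il unfolding orig_alt a by (simp split: if_split; arith)
      next
        case False
        then have 6: "j < l" using assms by linarith
        then have a: "adj i j k = k" "adj i j l = l - 2" "adj k l i = i - 1" "adj k l j = j - 1" using assms ki il by (auto simp: adj_def)
        show ?thesis using assms(1,2) 6 ki il unfolding orig_alt a by (simp split: if_split; arith)
      qed
    qed
  qed
qed

context rg begin
lemma tr_move: "\<forall>y\<in>set M. E (fst x) (fst y) \<Longrightarrow> (cstep E)\<^sup>*\<^sup>* (P@[x]@M@Q) (P@M@[x]@Q)"
proof (induction M arbitrary: P)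
  case Nil then show ?case by simp
next
  case (Cons y M)
  have "cstep E (P@[x]@(y#M)@Q) ((P@[y])@[x]@M@Q)"
    unfolding cstep_def using Cons.prems
    by (auto intro!: exI[of _ "length P"] simp: nth_append list_update_append)
  moreover have "(cstep E)\<^sup>*\<^sup>* ((P@[y])@[x]@M@Q) ((P@[y])@M@[x]@Q)"
    using Cons.IH[of "P@[y]"] Cons.prems by simp
  ultimately show ?case by simp
qed

lemma decomp: "i < j \<Longrightarrow> j < length w \<Longrightarrow>
   w = take i w @ [w!i] @ take (j - Suc i) (drop (Suc i) w) @ [w!j] @ drop (Suc j) w"
proof -
  assume a: "i < j" "j < length w"
  have "w = take i w @ [w!i] @ drop (Suc i) w" using a by (simp add: id_take_nth_drop)
  moreover have "drop (Suc i) w = take (j - Suc i) (drop (Suc i) w) @ [w!j] @ drop (Suc j) w"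
  proof -
    have e1: "drop (Suc (j - Suc i)) (drop (Suc i) w) = drop (Suc j) w"
      using a by (simp add: drop_drop)
    have e2: "drop (Suc i) w ! (j - Suc i) = w ! j" using a by (simp add: nth_drop)
    show ?thesis
      using id_take_nth_drop[of "j - Suc i" "drop (Suc i) w"] a unfolding e1 e2 by simp
  qed
  ultimately show ?thesis by metis
qed

lemma set_mid: "y \<in> set (take (j - Suc i) (drop (Suc i) w)) \<Longrightarrow> \<exists>m. i < m \<and> m < j \<and> m < length w \<and> y = w!m"
proof -
  assume "y \<in> set (take (j - Suc i) (drop (Suc i) w))"
  then obtain n where n: "n < length (take (j - Suc i) (drop (Suc i) w))"
    and y: "y = take (j - Suc i) (drop (Suc i) w) ! n" by (auto simp: in_set_conv_nth)
  have "n < j - Suc i" "Suc i + n < length w" using n by auto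
  moreover have "y = w ! (Suc i + n)"
  proof -
    have "Suc i \<le> length w" using n by auto
    then show ?thesis using y n nth_drop[of "Suc i" w n] by simp
  qed
  ultimately show ?thesis by (intro exI[of _ "Suc i + n"]) auto
qed

lemma cp_mid: assumes c: "cp E w i j" shows "\<forall>y\<in>set (take (j - Suc i) (drop (Suc i) w)). E (fst (w!i)) (fst y)"
proof (rule ballI)
  fix y assume "y \<in> set (take (j - Suc i) (drop (Suc i) w))"
  from set_mid[OF this] obtain m where "i < m" "m < j" "y = w!m" by blast
  then show "E (fst (w!i)) (fst y)" using c unfolding cp_def by simp
qed

lemma cp_same_left: assumes "cp E w i j" "cp E w i l" shows "j = l"
proof (rule ccontr)
  assume "j \<noteq> l"
  then consider "j < l" | "l < j" by linarith
  then show False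
  proof cases
    case 1 then have "E (fst (w!i)) (fst (w!j))" using assms(1,2) unfolding cp_def by blast
    then show False using assms(1) irrefl unfolding cp_def by simp
  next
    case 2 then have "E (fst (w!i)) (fst (w!l))" using assms(1,2) unfolding cp_def by blast
    then show False using assms(2) irrefl unfolding cp_def by simp
  qed
qed

lemma cp_same_right: assumes "cp E w i j" "cp E w k j" shows "i = k"
proof (rule ccontr)
  assume "i \<noteq> k"
  then consider "i < k" | "k < i" by linarith
  then show False
  proof cases
    case 1 then have "E (fst (w!i)) (fst (w!k))" using assms(1,2) unfolding cp_def by blast
    then show False using assms irrefl unfolding cp_def by simp
  next
    case 2 then have "E (fst (w!k)) (fst (w!i))" using assms(1,2) unfolding cp_def by blast
    then show False using assms irrefl unfolding cp_def by simp
  qed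
qed

lemma cp_chain: "cp E w i j \<Longrightarrow> cp E w j l \<Longrightarrow> (cstep E)\<^sup>*\<^sup>* (del2 w j l) (del2 w i j)"
proof -
  assume c1: "cp E w i j" and c2: "cp E w j l"
  from c1 c2 have a: "i < j" "j < l" "l < length w" by (auto simp: cp_def)
  define M1 where "M1 = take (j - Suc i) (drop (Suc i) w)"
  define M2 where "M2 = take (l - Suc j) (drop (Suc j) w)"
  have d1: "w = take i w @ [w!i] @ M1 @ [w!j] @ drop (Suc j) w"
    using decomp[of i j w] a M1_def by simp
  have d2: "w = take j w @ [w!j] @ M2 @ [w!l] @ drop (Suc l) w"
    using decomp[of j l w] a M2_def by simp
  have dj: "drop (Suc j) w = M2 @ [w!l] @ drop (Suc l) w"
  proof -
    have "drop (Suc j) w = drop (Suc j) (take j w @ [w!j] @ M2 @ [w!l] @ drop (Suc l) w)"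
      using arg_cong[OF d2, of "drop (Suc j)"] .
    also have "\<dots> = M2 @ [w!l] @ drop (Suc l) w" using a by simp
    finally show ?thesis .
  qed
  have tj: "take j w = take i w @ [w!i] @ M1"
  proof -
    have ji: "j - i = Suc (length M1)" using a by (simp add: M1_def)
    have "take j w = take j (take i w @ [w!i] @ M1 @ [w!j] @ drop (Suc j) w)"
      using arg_cong[OF d1, of "take j"] .
    also have "\<dots> = take i w @ [w!i] @ M1"
      using a by (simp add: ji)
    finally show ?thesis .
  qed
  have e1: "del2 w i j = take i w @ M1 @ M2 @ [w!l] @ drop (Suc l) w"
    unfolding del2_def M1_def[symmetric] dj by simp
  have e2: "del2 w j l = take i w @ [w!i] @ (M1 @ M2) @ drop (Suc l) w"
    unfolding del2_def M2_def[symmetric] tj by simp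
  have wl: "w!l = w!i" using c1 c2 unfolding cp_def by (simp add: prod_eq_iff)
  have "\<forall>y\<in>set (M1 @ M2). E (fst (w!i)) (fst y)"
    using cp_mid[OF c1] cp_mid[OF c2] c1 unfolding M1_def M2_def cp_def by auto
  from tr_move[OF this, of "take i w" "drop (Suc l) w"]
  show ?thesis unfolding e1 e2 wl by simp
qed

lemma cp_del:
  assumes c1: "cp E w i j" and c2: "cp E w k l" and d: "k \<noteq> i" "k \<noteq> j" "l \<noteq> i" "l \<noteq> j"
  shows "cp E (del2 w i j) (adj i j k) (adj i j l)"
proof -
  from c1 have ij: "i < j" "j < length w" by (auto simp: cp_def)
  from c2 have kl: "k < l" "l < length w" by (auto simp: cp_def)
  have L: "length (del2 w i j) = length w - 2" using ij by (simp add: length_del2)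
  have ak: "adj i j k < length w - 2" "adj i j l < length w - 2"
    using adj_lt[of i j "length w"] ij kl d by auto
  have nk: "del2 w i j ! adj i j k = w ! k" "del2 w i j ! adj i j l = w ! l"
    using ak ij d by (auto simp: nth_del2 orig_adj)
  have bet: "E (fst (del2 w i j ! adj i j k)) (fst (del2 w i j ! n))"
    if "adj i j k < n" "n < adj i j l" for n
  proof -
    have n: "n < length w - 2" using that ak by linarith
    have "k < orig i j n" "orig i j n < l"
      using orig_gt[of i j k n] orig_less[of i j l n] that ij d by auto
    then have "E (fst (w!k)) (fst (w ! orig i j n))" using c2 unfolding cp_def by blast
    then show ?thesis using nk n ij by (simp add: nth_del2)
  qed
  show ?thesis unfolding cp_def
    using adj_mono[of i j k l] ij kl d ak L nk c2 bet unfolding cp_def by auto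
qed

lemma del2_comm:
  assumes ij: "i < j" "j < length w" and kl: "k < l" "l < length w"
    and d: "k \<noteq> i" "k \<noteq> j" "l \<noteq> i" "l \<noteq> j"
  shows "del2 (del2 w i j) (adj i j k) (adj i j l) = del2 (del2 w k l) (adj k l i) (adj k l j)"
proof -
  have ak: "adj i j k < adj i j l" "adj i j l < length w - 2"
    using adj_mono[of i j k l] adj_lt[of i j "length w" l] ij kl d by auto
  have ai: "adj k l i < adj k l j" "adj k l j < length w - 2"
    using adj_mono[of k l i j] adj_lt[of k l "length w" j] ij kl d by auto
  have idx: "orig i j (orig (adj i j k) (adj i j l) n) = orig k l (orig (adj k l i) (adj k l j) n)" for n
    using idx[of i j k l n] ij kl d by simp
  show ?thesis
  proof (rule nth_equalityI)
    show "length (del2 (del2 w i j) (adj i j k) (adj i j l)) = length (del2 (del2 w k l) (adj k l i) (adj k l j))"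
      using ak ai ij kl by (simp add: length_del2)
  next
    fix n assume "n < length (del2 (del2 w i j) (adj i j k) (adj i j l))"
    then have n: "n < length w - 2 - 2" using ak ij by (simp add: length_del2)
    have o1: "orig (adj i j k) (adj i j l) n < length w - 2"
      using orig_lt[of "adj i j k" "adj i j l" "length w - 2" n] ak n by simp
    have o2: "orig (adj k l i) (adj k l j) n < length w - 2"
      using orig_lt[of "adj k l i" "adj k l j" "length w - 2" n] ai n by simp
    show "del2 (del2 w i j) (adj i j k) (adj i j l) ! n = del2 (del2 w k l) (adj k l i) (adj k l j) ! n"
      using n ak ai ij kl o1 o2 idx[of n] by (simp add: nth_del2 length_del2)
  qed
qed

lemma local_conf:
  assumes r1: "rstep E w w1" and r2: "rstep E w w2"
  shows "w1 = w2 \<or> (cstep E)\<^sup>*\<^sup>* w1 w2 \<or> (cstep E)\<^sup>*\<^sup>* w2 w1 \<or> (\<exists>w3. rstep E w1 w3 \<and> rstep E w2 w3)"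
proof -
  obtain i j where c1: "cp E w i j" and w1: "w1 = del2 w i j" using r1 by (auto simp: rstep_def)
  obtain k l where c2: "cp E w k l" and w2: "w2 = del2 w k l" using r2 by (auto simp: rstep_def)
  consider "i = k" | "j = l" | "j = k" | "l = i" | "i \<noteq> k" "j \<noteq> l" "j \<noteq> k" "l \<noteq> i" by blast
  then show ?thesis
  proof cases
    case 1 then have "j = l" using cp_same_left c1 c2 by blast
    then show ?thesis using 1 w1 w2 by simp
  next
    case 2 then have "i = k" using cp_same_right c1 c2 by blast
    then show ?thesis using 2 w1 w2 by simp
  next
    case 3 then show ?thesis using cp_chain[of w i j l] c1 c2 w1 w2 by simp
  next
    case 4 then show ?thesis using cp_chain[of w k l j] c1 c2 w1 w2 by simp
  next
    case 5
    have ij: "i < j" "j < length w" using c1 by (auto simp: cp_def)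
    have kl: "k < l" "l < length w" using c2 by (auto simp: cp_def)
    have d: "k \<noteq> i" "k \<noteq> j" "l \<noteq> i" "l \<noteq> j" using 5 by auto
    have "cp E w1 (adj i j k) (adj i j l)" using cp_del[OF c1 c2 d] w1 by simp
    moreover have "cp E w2 (adj k l i) (adj k l j)" using cp_del[OF c2 c1] d w2 by auto
    moreover have "del2 w1 (adj i j k) (adj i j l) = del2 w2 (adj k l i) (adj k l j)"
      using del2_comm[OF ij kl d] w1 w2 by simp
    ultimately show ?thesis unfolding rstep_def by metis
  qed
qed


abbreviation tr where "tr \<equiv> (cstep E)\<^sup>*\<^sup>*"

lemma tr_sym: "tr u w \<Longrightarrow> tr w u"
proof (induction rule: rtranclp_induct)
  case base then show ?case by simp
next
  case (step y z) then show ?case using cstep_sym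
    by (meson converse_rtranclp_into_rtranclp)
qed

lemma tr_length: "tr u w \<Longrightarrow> length w = length u"
  by (induction rule: rtranclp_induct) (auto simp: cstep_length)

lemma rstep_length: "rstep E w w' \<Longrightarrow> length w' = length w - 2 \<and> 2 \<le> length w"
  by (auto simp: rstep_def cp_def length_del2)

lemma rsteps_length: "(rstep E)\<^sup>*\<^sup>* w z \<Longrightarrow> z = w \<or> length z < length w"
proof (induction rule: rtranclp_induct)
  case base then show ?case by simp
next
  case (step y z) then show ?case using rstep_length[of y z] by auto
qed

lemma irr_iff: "irr E w \<longleftrightarrow> \<not> (\<exists>w'. rstep E w w')"
  by (auto simp: irr_def rstep_def)

lemma irr_tr: "tr w w' \<Longrightarrow> irr E w \<Longrightarrow> irr E w'"
proof (induction rule: rtranclp_induct)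
  case base then show ?case by simp
next
  case (step y z)
  then have iy: "irr E y" by simp
  show ?case
  proof (rule ccontr)
    assume "\<not> irr E z"
    then obtain z2 where "rstep E z z2" by (auto simp: irr_iff)
    with cstep_rstep[OF cstep_sym[OF step(2)]] obtain y2 where "rstep E y y2" by blast
    then show False using iy by (auto simp: irr_iff)
  qed
qed

lemma tr_rstep: "tr w w' \<Longrightarrow> rstep E w w1 \<Longrightarrow> \<exists>w1'. rstep E w' w1' \<and> tr w1 w1'"
proof (induction arbitrary: w1 rule: rtranclp_induct)
  case base then show ?case by blast
next
  case (step y z)
  then obtain y1 where y1: "rstep E y y1" "tr w1 y1" by blast
  from cstep_rstep[OF step(2) y1(1)] obtain z1 where "rstep E z z1" "z1 = y1 \<or> cstep E y1 z1" by blast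
  then show ?case using y1(2) by (meson rtranclp.rtrancl_into_rtrancl)
qed

lemma exists_irr: "\<exists>z. (rstep E)\<^sup>*\<^sup>* w z \<and> irr E z"
proof (induction "length w" arbitrary: w rule: less_induct)
  case less
  show ?case
  proof (cases "irr E w")
    case True then show ?thesis by blast
  next
    case False
    then obtain w1 where w1: "rstep E w w1" by (auto simp: irr_iff)
    then have "length w1 < length w" using rstep_length[of w w1] by auto
    then obtain z where "(rstep E)\<^sup>*\<^sup>* w1 z" "irr E z" using less by blast
    then show ?thesis using w1 by (meson converse_rtranclp_into_rtranclp)
  qed
qed

lemma irr_rsteps: "irr E w \<Longrightarrow> (rstep E)\<^sup>*\<^sup>* w z \<Longrightarrow> z = w"
  by (metis converse_rtranclpE irr_iff)

definition Irr where "Irr w z \<longleftrightarrow> (rstep E)\<^sup>*\<^sup>* w z \<and> irr E z"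

lemma Irr_step: "Irr w z \<Longrightarrow> \<not> irr E w \<Longrightarrow> \<exists>w1. rstep E w w1 \<and> Irr w1 z"
  unfolding Irr_def by (metis converse_rtranclpE)

lemma AB: "\<forall>w. length w = n \<longrightarrow> (\<forall>z1 z2. Irr w z1 \<longrightarrow> Irr w z2 \<longrightarrow> tr z1 z2) \<and>
     (\<forall>w' z z'. tr w w' \<longrightarrow> Irr w z \<longrightarrow> Irr w' z' \<longrightarrow> tr z z')"
proof (induction n rule: less_induct)
  case (less n)
  have A: "tr z1 z2" if lw: "length w = n" and h1: "Irr w z1" and h2: "Irr w z2" for w z1 z2
  proof (cases "irr E w")
    case True
    have "z1 = w" "z2 = w" using h1 h2 irr_rsteps[OF True] unfolding Irr_def by blast+
    then show ?thesis by simp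
  next
    case False
    obtain w1 where w1: "rstep E w w1" "Irr w1 z1" using Irr_step[OF h1 False] by blast
    obtain w2 where w2: "rstep E w w2" "Irr w2 z2" using Irr_step[OF h2 False] by blast
    have l1: "length w1 < n" using w1(1) rstep_length[of w w1] lw by auto
    have l2: "length w2 < n" using w2(1) rstep_length[of w w2] lw by auto
    from local_conf[OF w1(1) w2(1)] consider "w1 = w2" | "tr w1 w2" | "tr w2 w1"
      | "\<exists>w3. rstep E w1 w3 \<and> rstep E w2 w3" by blast
    then show ?thesis
    proof cases
      case 1 then show ?thesis using less[rule_format, OF l1] w1 w2 by blast
    next
      case 2 then show ?thesis using less[rule_format, OF l1] w1 w2 by blast
    next
      case 3 then have "tr z2 z1" using less[rule_format, OF l2] w1 w2 by blast
      then show ?thesis by (rule tr_sym)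
    next
      case 4
      then obtain w3 where w3: "rstep E w1 w3" "rstep E w2 w3" by blast
      obtain z3 where z3: "Irr w3 z3" using exists_irr unfolding Irr_def by blast
      have "Irr w1 z3" "Irr w2 z3" using z3 w3 unfolding Irr_def
        by (meson converse_rtranclp_into_rtranclp)+
      then have "tr z1 z3" "tr z2 z3" using less[rule_format, OF l1] less[rule_format, OF l2] w1 w2 by blast+
      then show ?thesis using tr_sym by (meson rtranclp_trans)
    qed
  qed
  have B: "tr z z'" if lw: "length w = n" and t: "tr w w'" and h1: "Irr w z" and h2: "Irr w' z'" for w w' z z'
  proof (cases "irr E w")
    case True
    then have "z = w" using h1 irr_rsteps unfolding Irr_def by blast
    moreover have "irr E w'" using irr_tr[OF t True] .
    then have "z' = w'" using h2 irr_rsteps unfolding Irr_def by blast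
    ultimately show ?thesis using t by simp
  next
    case False
    obtain w1 where w1: "rstep E w w1" "Irr w1 z" using Irr_step[OF h1 False] by blast
    obtain w1' where w1': "rstep E w' w1'" "tr w1 w1'" using tr_rstep[OF t w1(1)] by blast
    obtain z'' where z'': "Irr w1' z''" using exists_irr unfolding Irr_def by blast
    have l1: "length w1 < n" using w1(1) rstep_length[of w w1] lw by auto
    have "tr z z''" using less[rule_format, OF l1] w1 w1' z'' by blast
    moreover have "Irr w' z''" using w1'(1) z'' unfolding Irr_def by (meson converse_rtranclp_into_rtranclp)
    then have "tr z'' z'" using A[OF _ _ h2] tr_length[OF t] lw by simp
    ultimately show ?thesis by (meson rtranclp_trans)
  qed
  show ?case using A B by blast
qed

lemma Irr_unique: "Irr w z1 \<Longrightarrow> Irr w z2 \<Longrightarrow> tr z1 z2"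
  using AB by blast

lemma Irr_tr: "tr w w' \<Longrightarrow> Irr w z \<Longrightarrow> Irr w' z' \<Longrightarrow> tr z z'"
  using AB by blast

lemma cancel_rstep: "rstep E (xs @ [(a, s), (a, \<not> s)] @ ys) (xs @ ys)"
proof -
  let ?w = "xs @ [(a, s), (a, \<not> s)] @ ys"
  have "cp E ?w (length xs) (Suc (length xs))" by (simp add: cp_def nth_append)
  moreover have "del2 ?w (length xs) (Suc (length xs)) = xs @ ys" by (simp add: del2_def)
  ultimately show ?thesis unfolding rstep_def by metis
qed

lemma commute_cstep: "E a b \<Longrightarrow> cstep E (xs @ [(a, s), (b, t)] @ ys) (xs @ [(b, t), (a, s)] @ ys)"
  unfolding cstep_def
  by (auto intro!: exI[of _ "length xs"] simp: nth_append list_update_append)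

lemma step_S: "raag_step E u w \<Longrightarrow> Irr u z \<Longrightarrow> Irr w z' \<Longrightarrow> tr z z'"
proof (induction rule: raag_step.cases)
  case (cancel xs a s ys)
  then have "Irr u z'" using cancel_rstep unfolding Irr_def by (metis converse_rtranclp_into_rtranclp)
  then show ?case using Irr_unique cancel by blast
next
  case (commute a b xs s t ys)
  then have "tr u w" using commute_cstep by auto
  then show ?case using Irr_tr commute by blast
qed

theorem eqv_Irr: "eqv E u w \<Longrightarrow> Irr u z \<Longrightarrow> Irr w z' \<Longrightarrow> tr z z'"
proof (induction arbitrary: z' rule: equivclp_induct)
  case base then show ?case using Irr_unique by blast
next
  case (step y x)
  obtain m where m: "Irr y m" using exists_irr unfolding Irr_def by blast
  have "tr z m" using step.IH step.prems m by blast
  moreover have "tr m z'" using step(2) step_S m step.prems(2) tr_sym by blast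
  ultimately show ?case by (meson rtranclp_trans)
qed

end

lemma nth_word_inv: "k < length u \<Longrightarrow> word_inv u ! k = (fst (u ! (length u - Suc k)), \<not> snd (u ! (length u - Suc k)))"
  by (simp add: word_inv_def rev_nth case_prod_beta)

lemma set_word_inv: "y \<in> set (word_inv u) \<longleftrightarrow> (fst y, \<not> snd y) \<in> set u"
  by (cases y) (force simp: word_inv_def image_iff)

lemma eqv_word_inv_step: "raag_step E u w \<Longrightarrow> (\<And>a b. E a b \<Longrightarrow> E b a) \<Longrightarrow> raag_step E (word_inv u) (word_inv w)"
proof (induction rule: raag_step.cases)
  case (cancel xs a s ys)
  then show ?case using raag_step.cancel[of E "word_inv ys" a s "word_inv xs"]
    by (simp add: word_inv_def)
next
  case (commute a b xs s t ys)
  then show ?case using raag_step.commute[of E b a "word_inv ys" "\<not> t" "\<not> s" "word_inv xs"]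
    by (simp add: word_inv_def)
qed

lemma eqv_word_inv: "eqv E u w \<Longrightarrow> (\<And>a b. E a b \<Longrightarrow> E b a) \<Longrightarrow> eqv E (word_inv u) (word_inv w)"
proof (induction rule: equivclp_induct)
  case base then show ?case by simp
next
  case (step y z) then show ?case
    by (meson equivclp_into_equivclp eqv_word_inv_step)
qed

lemma snoc_comm: "[x] @ F = F @ [x] \<Longrightarrow> \<forall>y\<in>set F. y = x"
proof (induction F)
  case Nil then show ?case by simp
next
  case (Cons z F)
  then have "z = x" "x # F = F @ [x]" by auto
  then show ?case using Cons by simp
qed

context rg begin

lemma cstep_raag: "cstep E u w \<Longrightarrow> raag_step E u w"
proof -
  assume "cstep E u w"
  then obtain k where k: "Suc k < length u" "E (fst (u!k)) (fst (u!Suc k))"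
    and w: "w = u[k := u!Suc k, Suc k := u!k]" by (auto simp: cstep_def)
  have A: "u = take k u @ u!k # drop (Suc k) u" using id_take_nth_drop[of k u] k(1) by simp
  have B: "drop (Suc k) u = u!Suc k # drop (Suc (Suc k)) u" using Cons_nth_drop_Suc[OF k(1), symmetric] .
  have u: "u = take k u @ u!k # u!Suc k # drop (Suc (Suc k)) u" using A unfolding B .
  have "w = take k u @ [u!Suc k, u!k] @ drop (Suc (Suc k)) u"
  proof -
    have "w = (take k u @ u!k # u!Suc k # drop (Suc (Suc k)) u)[k := u!Suc k, Suc k := u!k]"
      unfolding w using arg_cong[OF u, of "\<lambda>v. v[k := u!Suc k, Suc k := u!k]"] .
    also have "\<dots> = take k u @ [u!Suc k, u!k] @ drop (Suc (Suc k)) u"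
      using k(1) by (simp add: list_update_append)
    finally show ?thesis .
  qed
  moreover have "raag_step E (take k u @ [u!k, u!Suc k] @ drop (Suc (Suc k)) u) (take k u @ [u!Suc k, u!k] @ drop (Suc (Suc k)) u)"
    using raag_step.commute[of E "fst (u!k)" "fst (u!Suc k)" "take k u" "snd (u!k)" "snd (u!Suc k)" "drop (Suc (Suc k)) u"] k
    by simp
  ultimately show ?thesis using u by simp
qed

lemma tr_eqv: "tr u w \<Longrightarrow> eqv E u w"
  by (induction rule: rtranclp_induct) (auto intro: equivclp_into_equivclp cstep_raag)

lemma eqv_move: "\<forall>y\<in>set M. E (fst x) (fst y) \<Longrightarrow> eqv E (P@[x]@M@Q) (P@M@[x]@Q)"
  using tr_move tr_eqv by blast

lemma eqv_cancel: "eqv E (P@[x]@[(fst x, \<not> snd x)]@Q) (P@Q)"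
  using raag_step.cancel[of E P "fst x" "snd x" Q] by auto

lemma rstep_eqv: "rstep E w w' \<Longrightarrow> eqv E w w'"
proof -
  assume "rstep E w w'"
  then obtain i j where c: "cp E w i j" and w': "w' = del2 w i j" by (auto simp: rstep_def)
  have ij: "i < j" "j < length w" using c by (auto simp: cp_def)
  define M where "M = take (j - Suc i) (drop (Suc i) w)"
  have d: "w = take i w @ [w!i] @ M @ [w!j] @ drop (Suc j) w" using decomp[OF ij] M_def by simp
  have wj: "w!j = (fst (w!i), \<not> snd (w!i))" using c by (simp add: cp_def prod_eq_iff)
  have "eqv E w (take i w @ M @ [w!i] @ [w!j] @ drop (Suc j) w)"
    using eqv_move[OF cp_mid[OF c], of "take i w" "[w!j] @ drop (Suc j) w"] d M_def by simp
  also have "eqv E \<dots> ((take i w @ M) @ drop (Suc j) w)"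
    using eqv_cancel[of "take i w @ M" "w!i" "drop (Suc j) w"] wj by simp
  finally show ?thesis using w' M_def by (simp add: del2_def)
qed

lemma rsteps_eqv: "(rstep E)\<^sup>*\<^sup>* w w' \<Longrightarrow> eqv E w w'"
  by (induction rule: rtranclp_induct) (auto intro: equivclp_trans rstep_eqv)

lemma del2_subseq: "i < j \<Longrightarrow> j < length w \<Longrightarrow> subseq (del2 w i j) w"
proof -
  assume ij: "i < j" "j < length w"
  define M where "M = take (j - Suc i) (drop (Suc i) w)"
  have d: "w = take i w @ [w!i] @ M @ [w!j] @ drop (Suc j) w" using decomp[OF ij] M_def by simp
  have "subseq (drop (Suc j) w) ([w!j] @ drop (Suc j) w)" by (simp add: list_emb_Cons)
  then have "subseq (M @ drop (Suc j) w) (M @ [w!j] @ drop (Suc j) w)" using subseq_append' by blast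
  then have "subseq (M @ drop (Suc j) w) ([w!i] @ M @ [w!j] @ drop (Suc j) w)" by (simp add: list_emb_Cons)
  then have "subseq (take i w @ M @ drop (Suc j) w) (take i w @ [w!i] @ M @ [w!j] @ drop (Suc j) w)"
    using subseq_append' by blast
  then show ?thesis using d M_def by (metis del2_def)
qed

lemma irr_reduced: "w \<in> words V \<Longrightarrow> irr E w \<Longrightarrow> reduced V E w"
proof -
  assume wV: "w \<in> words V" and ir: "irr E w"
  have "length w \<le> length u" if "(w, u) \<in> raag_rel V E" for u
  proof -
    have e: "eqv E w u" using that by (simp add: raag_rel_def)
    obtain z where z: "Irr u z" using exists_irr unfolding Irr_def by blast
    have "Irr w w" using ir unfolding Irr_def by simp
    then have "tr w z" using eqv_Irr[OF e _ z] by blast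
    then have "length z = length w" by (simp add: tr_length)
    moreover have "length z \<le> length u" using z rsteps_length unfolding Irr_def by fastforce
    ultimately show ?thesis by simp
  qed
  then show ?thesis using wV unfolding reduced_def by blast
qed

definition prj :: "'v \<Rightarrow> 'v \<Rightarrow> 'v word \<Rightarrow> 'v word" where
  "prj b d w = filter (\<lambda>y. fst y = b \<or> fst y = d) w"

lemma cstep_prj: "cstep E u w \<Longrightarrow> \<not> E b d \<Longrightarrow> prj b d u = prj b d w"
proof -
  assume c: "cstep E u w" and nbd: "\<not> E b d"
  then obtain k where k: "Suc k < length u" "E (fst (u!k)) (fst (u!Suc k))"
    and w: "w = u[k := u!Suc k, Suc k := u!k]" by (auto simp: cstep_def)
  have A: "u = take k u @ u!k # drop (Suc k) u" using id_take_nth_drop[of k u] k(1) by simp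
  have B: "drop (Suc k) u = u!Suc k # drop (Suc (Suc k)) u" using Cons_nth_drop_Suc[OF k(1), symmetric] .
  have u: "u = take k u @ u!k # u!Suc k # drop (Suc (Suc k)) u" using A unfolding B .
  have w2: "w = take k u @ [u!Suc k, u!k] @ drop (Suc (Suc k)) u"
  proof -
    have "w = (take k u @ u!k # u!Suc k # drop (Suc (Suc k)) u)[k := u!Suc k, Suc k := u!k]"
      unfolding w using arg_cong[OF u, of "\<lambda>v. v[k := u!Suc k, Suc k := u!k]"] .
    also have "\<dots> = take k u @ [u!Suc k, u!k] @ drop (Suc (Suc k)) u"
      using k(1) by (simp add: list_update_append)
    finally show ?thesis .
  qed
  have "\<not> ((fst (u!k) = b \<or> fst (u!k) = d) \<and> (fst (u!Suc k) = b \<or> fst (u!Suc k) = d))"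
    using k(2) nbd irrefl symm by metis
  then have "prj b d [u!k, u!Suc k] = prj b d [u!Suc k, u!k]" by (auto simp: prj_def)
  moreover have "\<And>P x y R. prj b d (P @ x # y # R) = prj b d P @ prj b d [x,y] @ prj b d R"
    by (simp add: prj_def)
  ultimately show ?thesis using w2 arg_cong[OF u, of "prj b d"] by simp
qed

lemma tr_prj: "tr u w \<Longrightarrow> \<not> E b d \<Longrightarrow> prj b d u = prj b d w"
  by (induction rule: rtranclp_induct) (auto dest: cstep_prj)

end

context rg begin

lemma prj_adj_nil: "\<forall>y\<in>set A. E a (fst y) \<Longrightarrow> \<not> E a b \<Longrightarrow> prj a b A = []"
  unfolding prj_def using irrefl by (auto simp: filter_empty_conv)

lemma side1:
  assumes A: "\<forall>y\<in>set A. E a (fst y)" and l: "fst l = a" and t: "tr (A@D@[l]) (A@[l]@D)"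
  shows "\<forall>y\<in>set D. E a (fst y) \<or> y = l"
proof
  fix y assume y: "y \<in> set D"
  show "E a (fst y) \<or> y = l"
  proof (rule ccontr)
    assume h: "\<not> (E a (fst y) \<or> y = l)"
    then have n: "\<not> E a (fst y)" by simp
    have "prj a (fst y) (A@D@[l]) = prj a (fst y) (A@[l]@D)" by (rule tr_prj[OF t n])
    then have "prj a (fst y) D @ [l] = [l] @ prj a (fst y) D"
      using prj_adj_nil[OF A n] l by (simp add: prj_def)
    then have "\<forall>x\<in>set (prj a (fst y) D). x = l" using snoc_comm by metis
    moreover have "y \<in> set (prj a (fst y) D)" using y by (simp add: prj_def)
    ultimately show False using h by blast
  qed
qed

lemma side2:
  assumes D: "\<forall>y\<in>set D. E a (fst y)" and l: "fst l = a" and t: "tr ([l]@A@D) (A@[l]@D)"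
  shows "\<forall>y\<in>set A. E a (fst y) \<or> y = l"
proof
  fix y assume y: "y \<in> set A"
  show "E a (fst y) \<or> y = l"
  proof (rule ccontr)
    assume h: "\<not> (E a (fst y) \<or> y = l)"
    then have n: "\<not> E a (fst y)" by simp
    have "prj a (fst y) ([l]@A@D) = prj a (fst y) (A@[l]@D)" by (rule tr_prj[OF t n])
    then have "[l] @ prj a (fst y) A = prj a (fst y) A @ [l]"
      using prj_adj_nil[OF D n] l by (simp add: prj_def)
    then have "\<forall>x\<in>set (prj a (fst y) A). x = l" using snoc_comm by metis
    moreover have "y \<in> set (prj a (fst y) A)" using y by (simp add: prj_def)
    ultimately show False using h by blast
  qed
qed

lemma cent:
  assumes ir: "irr E W" and Wd: "W = u @ [(c,True)] @ word_inv u"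
    and comm: "eqv E ([(a,True)] @ W) (W @ [(a,True)])"
  shows "\<forall>x\<in>set u. E a (fst x)"
proof -
  define XX where "XX = [(a,True)] @ W @ [(a,False)]"
  define N where "N = length W"
  have eX: "eqv E XX W"
  proof -
    have "eqv E XX (W @ [(a,True)] @ [(a,False)])"
      using eqv_app2[OF comm equivclp_refl[of _ "[(a,False)]"]] unfolding XX_def by simp
    also have "eqv E \<dots> W" using eqv_cancel[of W "(a,True)" "[]"] by simp
    finally show ?thesis .
  qed
  obtain z where z: "Irr XX z" using exists_irr unfolding Irr_def by blast
  have "Irr W W" using ir unfolding Irr_def by simp
  then have tz: "tr z W" using eqv_Irr[OF eX z] by blast
  then have lz: "length z = N" using tr_length N_def by simp
  have lX: "length XX = N + 2" unfolding XX_def N_def by simp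
  have "z \<noteq> XX" using lz lX by auto
  then obtain XX1 where XX1: "rstep E XX XX1" "(rstep E)\<^sup>*\<^sup>* XX1 z"
    using z unfolding Irr_def by (blast elim: converse_rtranclpE)
  have "length XX1 = N" using rstep_length[OF XX1(1)] lX by simp
  then have "z = XX1" using rsteps_length[OF XX1(2)] lz by auto
  then obtain i j where c: "cp E XX i j" and zd: "z = del2 XX i j" using XX1(1) by (auto simp: rstep_def)
  have ij: "i < j" "j < N + 2" using c lX by (auto simp: cp_def)
  have X0: "XX ! 0 = (a,True)" by (simp add: XX_def)
  have XN: "XX ! (N+1) = (a,False)" by (simp add: XX_def N_def nth_append)
  have XS: "m < N \<Longrightarrow> XX ! Suc m = W ! m" for m by (simp add: XX_def N_def nth_append)
  have G: "(\<forall>y\<in>set W. E a (fst y) \<or> y = (a,False)) \<or> (\<forall>y\<in>set W. E a (fst y) \<or> y = (a,True))"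
  proof (cases "i = 0")
    case True
    have adjW: "E a (fst (W ! m))" if "m < j - 1" "m < N" for m
    proof -
      have "E (fst (XX ! i)) (fst (XX ! Suc m))" using c True that unfolding cp_def by simp
      then show ?thesis using True X0 XS[OF that(2)] by simp
    qed
    show ?thesis
    proof (cases "j = N + 1")
      case True
      have "\<forall>y\<in>set W. E a (fst y)"
      proof
        fix y assume "y \<in> set W"
        then obtain m where "m < length W" "y = W ! m" by (auto simp: in_set_conv_nth)
        then show "E a (fst y)" using adjW[of m] True N_def by simp
      qed
      then show ?thesis by blast
    next
      case False
      then have jN: "j \<le> N" "0 < j" using ij by auto
      define q where "q = j - 1"
      have q: "q < N" "j = Suc q" using jN q_def by auto
      define Aq where "Aq = take q W"
      define Dq where "Dq = drop (Suc q) W"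
      have Wq: "W ! q = (a,False)"
      proof -
        have "fst (XX ! j) = a" "snd (XX ! j) = False" using c True X0 unfolding cp_def by simp_all
        then show ?thesis using XS[OF q(1)] q(2) by (simp add: prod_eq_iff)
      qed
      have "W = take q W @ W!q # drop (Suc q) W" by (rule id_take_nth_drop) (use q N_def in simp)
      then have Wd2: "W = Aq @ [(a,False)] @ Dq" unfolding Wq Aq_def[symmetric] Dq_def[symmetric] by simp
      have zz: "z = Aq @ Dq @ [(a,False)]"
        unfolding zd del2_def True XX_def Aq_def Dq_def using q N_def by simp
      have A: "\<forall>y\<in>set Aq. E a (fst y)"
      proof
        fix y assume "y \<in> set Aq"
        then obtain m where "m < q" "y = W ! m" unfolding Aq_def by (auto simp: in_set_conv_nth)
        then show "E a (fst y)" using adjW[of m] q by simp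
      qed
      have t: "tr (Aq @ Dq @ [(a,False)]) (Aq @ [(a,False)] @ Dq)"
        using tz unfolding Wd2 zz .
      have "\<forall>y\<in>set Dq. E a (fst y) \<or> y = (a,False)"
        using side1[OF A _ t] by simp
      then have "\<forall>y\<in>set (Aq @ [(a,False)] @ Dq). E a (fst y) \<or> y = (a,False)"
        using A by auto
      then show ?thesis using Wd2 by simp
    qed
  next
    case False
    then obtain i0 where i0: "i = Suc i0" using not0_implies_Suc by blast
    show ?thesis
    proof (cases "j = N + 1")
      case True
      have i0N: "i0 < N" using ij i0 True by simp
      have Wi: "W ! i0 = (a,True)"
      proof -
        have "fst (XX ! i) = a" "snd (XX ! i) = True" using c True XN unfolding cp_def by simp_all
        then show ?thesis using XS[OF i0N] i0 by (simp add: prod_eq_iff)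
      qed
      have adjW: "E a (fst (W ! m))" if "i0 < m" "m < N" for m
      proof -
        have "E (fst (XX ! i)) (fst (XX ! Suc m))" using c True i0 that unfolding cp_def by simp
        then show ?thesis using XS[OF that(2)] XS[OF i0N] Wi i0 by simp
      qed
      define Aq where "Aq = take i0 W"
      define Dq where "Dq = drop (Suc i0) W"
      have "W = take i0 W @ W!i0 # drop (Suc i0) W" by (rule id_take_nth_drop) (use i0N N_def in simp)
      then have Wd2: "W = Aq @ [(a,True)] @ Dq" unfolding Wi Aq_def[symmetric] Dq_def[symmetric] by simp
      have zz: "z = [(a,True)] @ Aq @ Dq"
      proof -
        have e1: "drop (Suc i) XX = Dq @ [(a,False)]" unfolding XX_def Dq_def using i0 i0N N_def by simp
        have e2: "N + 1 - Suc i = length Dq" unfolding Dq_def using i0 i0N N_def by simp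
        have "take (N + 1 - Suc i) (drop (Suc i) XX) = Dq" unfolding e1 e2 by simp
        moreover have "take i XX = [(a,True)] @ Aq" unfolding XX_def Aq_def using i0 i0N N_def by simp
        moreover have "drop (Suc (N+1)) XX = []" using lX by simp
        ultimately show ?thesis unfolding zd del2_def True by simp
      qed
      have D: "\<forall>y\<in>set Dq. E a (fst y)"
      proof
        fix y assume "y \<in> set Dq"
        then obtain m where "m < length W - Suc i0" "y = W ! (Suc i0 + m)" unfolding Dq_def
          by (auto simp: in_set_conv_nth)
        then show "E a (fst y)" using adjW[of "Suc i0 + m"] N_def by simp
      qed
      have t: "tr ([(a,True)] @ Aq @ Dq) (Aq @ [(a,True)] @ Dq)"
        using tz unfolding Wd2 zz .
      have "\<forall>y\<in>set Aq. E a (fst y) \<or> y = (a,True)"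
        using side2[OF D _ t] by simp
      then have "\<forall>y\<in>set (Aq @ [(a,True)] @ Dq). E a (fst y) \<or> y = (a,True)"
        using D by auto
      then show ?thesis using Wd2 by simp
    next
      case False
      then have jN: "j \<le> N" using ij by simp
      obtain j0 where j0: "j = Suc j0" using ij(1) by (cases j) auto
      have ij0: "i0 < j0" "j0 < N" using ij i0 j0 jN by auto
      have "cp E W i0 j0"
        unfolding cp_def
      proof (intro conjI allI impI)
        show "i0 < j0" "j0 < length W" using ij0 N_def by auto
        show "fst (W ! j0) = fst (W ! i0)" "snd (W ! j0) = (\<not> snd (W ! i0))"
          using c i0 j0 XS[of i0] XS[of j0] ij0 unfolding cp_def by auto
      next
        fix m assume "i0 < m" "m < j0"
        then have "E (fst (XX ! i)) (fst (XX ! Suc m))" using c i0 j0 unfolding cp_def by simp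
        then show "E (fst (W ! i0)) (fst (W ! m))" using XS[of i0] XS[of m] ij0 i0 \<open>m < j0\<close> by simp
      qed
      then show ?thesis using ir by (auto simp: irr_def)
    qed
  qed
  have uW: "set u \<subseteq> set W" "set (word_inv u) \<subseteq> set W" using Wd by auto
  show ?thesis
  proof
    fix x assume x: "x \<in> set u"
    then have xW: "x \<in> set W" using uW by blast
    from G show "E a (fst x)"
    proof
      assume H: "\<forall>y\<in>set W. E a (fst y) \<or> y = (a,False)"
      show ?thesis
      proof (rule ccontr)
        assume n: "\<not> E a (fst x)"
        then have "x = (a,False)" using H xW by blast
        then have "(a,True) \<in> set (word_inv u)" using x set_word_inv[of "(a,True)" u] by simp
        then have "(a,True) \<in> set W" using uW by blast
        then have "E a a \<or> (a,True) = (a,False)" using H by fastforce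
        then show False using irrefl by simp
      qed
    next
      assume H: "\<forall>y\<in>set W. E a (fst y) \<or> y = (a,True)"
      show ?thesis
      proof (rule ccontr)
        assume n: "\<not> E a (fst x)"
        then have "x = (a,True)" using H xW by blast
        then have "(a,False) \<in> set (word_inv u)" using x set_word_inv[of "(a,False)" u] by simp
        then have "(a,False) \<in> set W" using uW by blast
        then have "E a a \<or> (a,False) = (a,True)" using H by fastforce
        then show False using irrefl by simp
      qed
    qed
  qed
qed

end

context rg begin

lemma eqv_swap_c:
  assumes "fst x = c \<or> E (fst x) c"
  shows "eqv E (A @ [x] @ [(c,True)] @ B) (A @ [(c,True)] @ [x] @ B)"
proof -
  have "eqv E ([x] @ [(c,True)]) ([(c,True)] @ [x])"
  proof (cases "E (fst x) c")
    case True
    then show ?thesis using raag_step.commute[of E "fst x" c "[]" "snd x" True "[]"] by auto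
  next
    case False
    then have xc: "fst x = c" using assms by simp
    show ?thesis
    proof (cases "snd x")
      case True
      then have "x = (c,True)" using xc by (cases x) simp
      then show ?thesis by simp
    next
      case False
      then have x: "x = (c, False)" using xc by (simp add: prod_eq_iff)
      have e1: "eqv E [(c,False), (c,True)] []"
        using raag_step.cancel[of E "[]" c False "[]"] by (simp add: r_into_equivclp)
      have e2: "eqv E [(c,True), (c,False)] []"
        using raag_step.cancel[of E "[]" c True "[]"] by (simp add: r_into_equivclp)
      have "eqv E [(c,False), (c,True)] [(c,True), (c,False)]"
        by (rule equivclp_trans[OF e1 equivclp_sym[OF e2]])
      then show ?thesis using x by simp
    qed
  qed
  then show ?thesis using eqv_append[of E "[x] @ [(c,True)]" "[(c,True)] @ [x]" A B] by simp
qed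

lemma del1_conj:
  assumes p: "p < length u" and P1: "fst (u!p) = c \<or> E (fst (u!p)) c"
    and P2: "\<forall>m. p < m \<longrightarrow> m < length u \<longrightarrow> E (fst (u!p)) (fst (u!m))"
  shows "eqv E (u @ [(c,True)] @ word_inv u)
     ((take p u @ drop (Suc p) u) @ [(c,True)] @ word_inv (take p u @ drop (Suc p) u))"
proof -
  define P where "P = take p u"
  define Q where "Q = drop (Suc p) u"
  define x where "x = u ! p"
  have "u = take p u @ u!p # drop (Suc p) u" by (rule id_take_nth_drop) (rule p)
  then have ud: "u = P @ [x] @ Q" unfolding P_def[symmetric] Q_def[symmetric] x_def[symmetric] by simp
  have Qa: "\<forall>y\<in>set Q. E (fst x) (fst y)"
  proof
    fix y assume "y \<in> set Q"
    then obtain m where "m < length u - Suc p" "y = u ! (Suc p + m)" unfolding Q_def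
      by (auto simp: in_set_conv_nth)
    then show "E (fst x) (fst y)" using P2 x_def by simp
  qed
  have Qia: "\<forall>y\<in>set (word_inv Q). E (fst x) (fst y)"
    using Qa set_word_inv by fastforce
  have xi: "word_inv [x] = [(fst x, \<not> snd x)]" by (cases x) simp
  have "eqv E (u @ [(c,True)] @ word_inv u) (P @ [x] @ Q @ ([(c,True)] @ word_inv Q @ [(fst x, \<not> snd x)] @ word_inv P))"
    unfolding ud by (simp add: xi word_inv_Cons)
  also have "eqv E \<dots> (P @ Q @ [x] @ ([(c,True)] @ word_inv Q @ [(fst x, \<not> snd x)] @ word_inv P))"
    by (rule eqv_move[OF Qa])
  also have "eqv E \<dots> ((P @ Q) @ [(c,True)] @ [x] @ (word_inv Q @ [(fst x, \<not> snd x)] @ word_inv P))"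
    using eqv_swap_c[of x c "P @ Q" "word_inv Q @ [(fst x, \<not> snd x)] @ word_inv P"] P1 x_def by simp
  also have "eqv E \<dots> ((P @ Q @ [(c,True)]) @ word_inv Q @ [x] @ ([(fst x, \<not> snd x)] @ word_inv P))"
    using eqv_move[OF Qia, of "P @ Q @ [(c,True)]" "[(fst x, \<not> snd x)] @ word_inv P"] by simp
  also have "eqv E \<dots> ((P @ Q @ [(c,True)] @ word_inv Q) @ word_inv P)"
    using eqv_cancel[of "P @ Q @ [(c,True)] @ word_inv Q" x "word_inv P"] by simp
  finally show ?thesis unfolding P_def Q_def by simp
qed

lemma subseq_tl: "subseq (tl xs) xs"
  by (cases xs) (auto simp: list_emb_Cons)

lemma take_drop_subseq: "subseq (take p u @ drop (Suc p) u) u"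
proof -
  have "drop (Suc p) u = tl (drop p u)" by (simp add: drop_Suc tl_drop)
  then have "subseq (drop (Suc p) u) (drop p u)" using subseq_tl by metis
  then have "subseq (take p u @ drop (Suc p) u) (take p u @ drop p u)"
    using subseq_append' by blast
  then show ?thesis by simp
qed

lemma conj_norm:
  "\<exists>u'. subseq u' u \<and> irr E (u' @ [(c,True)] @ word_inv u') \<and>
        eqv E (u @ [(c,True)] @ word_inv u) (u' @ [(c,True)] @ word_inv u')"
proof (induction "length u" arbitrary: u rule: less_induct)
  case less
  define W where "W = u @ [(c,True)] @ word_inv u"
  define n where "n = length u"
  have R1: "\<exists>u'. subseq u' u \<and> irr E (u' @ [(c,True)] @ word_inv u') \<and> eqv E W (u' @ [(c,True)] @ word_inv u')"
    if h1: "length u1 < length u" and h2: "subseq u1 u" and h3: "eqv E W (u1 @ [(c,True)] @ word_inv u1)" for u1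
  proof -
    obtain u' where u': "subseq u' u1" "irr E (u' @ [(c,True)] @ word_inv u')"
      "eqv E (u1 @ [(c,True)] @ word_inv u1) (u' @ [(c,True)] @ word_inv u')"
      using less[OF h1] by blast
    have "subseq u' u" by (rule subseq_order.order_trans[OF u'(1) h2])
    moreover have "eqv E W (u' @ [(c,True)] @ word_inv u')" by (rule equivclp_trans[OF h3 u'(3)])
    ultimately show ?thesis using u'(2) by blast
  qed
  have R2: "\<exists>u'. subseq u' u \<and> irr E (u' @ [(c,True)] @ word_inv u') \<and> eqv E W (u' @ [(c,True)] @ word_inv u')"
    if "cp E u i' j'" for i' j'
  proof -
    have ij: "i' < j'" "j' < length u" using that by (auto simp: cp_def)
    have "rstep E u (del2 u i' j')" using that unfolding rstep_def by blast
    then have e: "eqv E u (del2 u i' j')" by (rule rstep_eqv)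
    have ew: "eqv E (word_inv u) (word_inv (del2 u i' j'))" by (rule eqv_word_inv[OF e symm])
    have e3: "eqv E W (del2 u i' j' @ [(c,True)] @ word_inv (del2 u i' j'))"
      unfolding W_def by (rule eqv_app2[OF e eqv_app2[OF equivclp_refl ew]])
    have e1: "length (del2 u i' j') < length u" using ij by (simp add: length_del2)
    have e2: "subseq (del2 u i' j') u" by (rule del2_subseq[OF ij])
    show ?thesis by (rule R1[OF e1 e2 e3])
  qed
  have R3: "\<exists>u'. subseq u' u \<and> irr E (u' @ [(c,True)] @ word_inv u') \<and> eqv E W (u' @ [(c,True)] @ word_inv u')"
    if "p < n" "fst (u!p) = c \<or> E (fst (u!p)) c" "\<forall>m. p < m \<longrightarrow> m < n \<longrightarrow> E (fst (u!p)) (fst (u!m))" for p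
  proof -
    have "eqv E W ((take p u @ drop (Suc p) u) @ [(c,True)] @ word_inv (take p u @ drop (Suc p) u))"
      unfolding W_def by (rule del1_conj) (use that n_def in auto)
    moreover have "length (take p u @ drop (Suc p) u) < length u" using that(1) n_def by simp
    ultimately show ?thesis using R1[OF _ take_drop_subseq] by blast
  qed
  have lW: "length W = Suc (2 * n)" unfolding W_def n_def by simp
  have W1: "W ! m = u ! m" if "m < n" for m using that unfolding W_def n_def by (simp add: nth_append)
  have W2: "W ! n = (c,True)" unfolding W_def n_def by (simp add: nth_append)
  have W3: "W ! m = (fst (u ! (2*n - m)), \<not> snd (u ! (2*n - m)))" if "n < m" "m < Suc (2*n)" for m
  proof -
    have "W ! m = word_inv u ! (m - Suc n)" using that unfolding W_def n_def by (simp add: nth_append)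
    also have "\<dots> = (fst (u ! (n - Suc (m - Suc n))), \<not> snd (u ! (n - Suc (m - Suc n))))"
      using that n_def by (simp add: nth_word_inv)
    also have "n - Suc (m - Suc n) = 2*n - m" using that by simp
    finally show ?thesis .
  qed
  show ?case
  proof (cases "irr E W")
    case True
    have "subseq u u" by (rule subseq_order.order_refl)
    moreover have "irr E (u @ [(c,True)] @ word_inv u)" using True unfolding W_def .
    moreover have "eqv E (u @ [(c,True)] @ word_inv u) (u @ [(c,True)] @ word_inv u)" by simp
    ultimately show ?thesis by blast
  next
    case False
    then obtain i j where c: "cp E W i j" by (auto simp: irr_def)
    have ij: "i < j" "j < Suc (2*n)" using c lW by (auto simp: cp_def)
    have cbet: "E (fst (W!i)) (fst (W!m))" if "i < m" "m < j" for m using c that unfolding cp_def by blast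
    have cfst: "fst (W!j) = fst (W!i)" and csnd: "snd (W!j) = (\<not> snd (W!i))" using c unfolding cp_def by auto
    have "\<exists>u'. subseq u' u \<and> irr E (u' @ [(c,True)] @ word_inv u') \<and> eqv E W (u' @ [(c,True)] @ word_inv u')"
    proof -
      have "j < n \<or> n < i \<or> (i < n \<and> n \<le> j) \<or> i = n" by auto
      then consider "j < n" | "n < i" | "i < n" "n \<le> j" | "i = n" by blast
      then show ?thesis
      proof cases
        case 1
        have "cp E u i j"
          unfolding cp_def using ij 1 n_def cfst csnd W1 cbet by auto
        then show ?thesis by (rule R2)
      next
        case 2
        have "cp E u (2*n - j) (2*n - i)"
          unfolding cp_def
        proof (intro conjI allI impI)
          show "2*n - j < 2*n - i" "2*n - i < length u" using 2 ij n_def by auto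
          show "fst (u ! (2*n - i)) = fst (u ! (2*n - j))" "snd (u ! (2*n - i)) = (\<not> snd (u ! (2*n - j)))"
            using cfst csnd W3[of i] W3[of j] 2 ij by auto
        next
          fix m assume m: "2*n - j < m" "m < 2*n - i"
          have "E (fst (W!i)) (fst (W!(2*n - m)))" using cbet[of "2*n - m"] m 2 ij by auto
          moreover have "2*n - (2*n - m) = m" using m ij by auto
          ultimately show "E (fst (u ! (2*n - j))) (fst (u ! m))"
            using W3[of i] W3[of "2*n - m"] W3[of j] cfst m 2 ij by auto
        qed
        then show ?thesis by (rule R2)
      next
        case 3
        show ?thesis
        proof (cases "j = n")
          case True
          have "fst (u!i) = c" using cfst W1[OF 3(1)] W2 True by simp
          moreover have "\<forall>m. i < m \<longrightarrow> m < n \<longrightarrow> E (fst (u!i)) (fst (u!m))"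
            using cbet W1 3 True by auto
          ultimately show ?thesis using R3[of i] 3 by blast
        next
          case False
          then have jn: "n < j" using 3 by simp
          define a where "a = fst (u!i)"
          have Wi: "fst (W!i) = a" using W1[OF 3(1)] a_def by simp
          have uq: "fst (u ! (2*n - j)) = a" using cfst Wi W3[OF jn ij(2)] by simp
          have qi: "2*n - j = i"
          proof (rule ccontr)
            assume "2*n - j \<noteq> i"
            then consider "i < 2*n - j" | "2*n - j < i" by linarith
            then show False
            proof cases
              case 1
              have "2*n - j < n" using jn ij by simp
              then have "E a (fst (W ! (2*n - j)))" using cbet[of "2*n - j"] 1 jn Wi by simp
              then show False using W1[of "2*n - j"] \<open>2*n - j < n\<close> uq irrefl by simp
            next
              case 2
              have m1: "n < 2*n - i" "2*n - i < j" using 2 3 ij by auto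
              then have "E a (fst (W ! (2*n - i)))" using cbet[of "2*n - i"] 3 Wi by simp
              moreover have "2*n - (2*n - i) = i" using 3 by simp
              ultimately show False using W3[of "2*n - i"] m1 ij a_def irrefl by simp
            qed
          qed
          have "E a c" using cbet[of n] 3 jn Wi W2 by simp
          moreover have "\<forall>m. i < m \<longrightarrow> m < n \<longrightarrow> E (fst (u!i)) (fst (u!m))"
          proof (intro allI impI)
            fix m assume m: "i < m" "m < n"
            then have "E (fst (W!i)) (fst (W!m))" using cbet jn by simp
            then show "E (fst (u!i)) (fst (u!m))" using W1[of m] W1[OF 3(1)] m by simp
          qed
          ultimately show ?thesis using R3[of i] 3 a_def by blast
        qed
      next
        case 4
        have jn: "n < j" using 4 ij by simp
        define q where "q = 2*n - j"
        have qn: "q < n" using jn ij q_def by simp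
        have uq: "fst (u!q) = c" using cfst W2 4 W3[OF jn ij(2)] q_def by simp
        have "\<forall>m. q < m \<longrightarrow> m < n \<longrightarrow> E (fst (u!q)) (fst (u!m))"
        proof (intro allI impI)
          fix m assume m: "q < m" "m < n"
          have m1: "n < 2*n - m" "2*n - m < j" using m q_def jn ij by auto
          have "E c (fst (W ! (2*n - m)))" using cbet[of "2*n - m"] m1 4 W2 by simp
          moreover have "2*n - (2*n - m) = m" using m by simp
          ultimately show "E (fst (u!q)) (fst (u!m))" using W3[of "2*n - m"] m1 ij uq by simp
        qed
        then show ?thesis using R3[of q] qn uq by blast
      qed
    qed
    then show ?thesis by (simp only: W_def)
  qed
qed

end

lemma subseq_set: "subseq xs ys \<Longrightarrow> set xs \<subseteq> set ys"
  by (auto elim: list_emb_set)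

lemma sg_rg: "simplicial_graph V E \<Longrightarrow> rg E"
  unfolding simplicial_graph_def by unfold_locales auto

lemma conj_word:
  assumes ca: "conjugating_aut V E f" and v: "v \<in> V"
  shows "\<exists>g\<in>words V. f (raag_gen V E v) = raag_class V E (g @ [(v,True)] @ word_inv g)"
proof -
  obtain G where G: "G \<in> carrier (RAAG V E)"
    and fG: "f (raag_gen V E v) = G \<otimes>\<^bsub>RAAG V E\<^esub> raag_gen V E v \<otimes>\<^bsub>RAAG V E\<^esub> inv\<^bsub>RAAG V E\<^esub> G"
    using ca v unfolding conjugating_aut_def by blast
  obtain g where g: "g \<in> words V" and Gg: "G = raag_class V E g" using G by (auto simp: carrier_RAAG)
  have vV: "[(v,True)] \<in> words V" using v by simp
  have "G \<otimes>\<^bsub>RAAG V E\<^esub> raag_gen V E v \<otimes>\<^bsub>RAAG V E\<^esub> inv\<^bsub>RAAG V E\<^esub> G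
      = raag_class V E ((g @ [(v,True)]) @ word_inv g)"
    unfolding Gg gen_class using g vV
    by (simp add: inv_class mult_class del: append_assoc)
  then have "f (raag_gen V E v) = raag_class V E ((g @ [(v,True)]) @ word_inv g)"
    using fG by simp
  then show ?thesis using g by auto
qed

theorem lemma5p3:
  fixes V :: "'v set" and E :: "'v \<Rightarrow> 'v \<Rightarrow> bool" and v1 v2 v3 :: 'v
    and f :: "'v word set \<Rightarrow> 'v word set"
  assumes "simplicial_graph V E"
    and "v1 \<in> V" "v2 \<in> V" "v3 \<in> V"
    and "E v1 v2" "E v2 v3"
    and "graph_dist V E v1 v3 = 2"
    and "conjugating_aut V E f"
    and "f (raag_gen V E v1) = raag_gen V E v1"
  shows "(\<exists>w \<in> words V.
            raag_class V E w \<in> generate (RAAG V E) (raag_gen V E ` lk V E v1) \<and>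
            reduced V E (w @ [(v2, True)] @ word_inv w) \<and>
            raag_class V E (w @ [(v2, True)] @ word_inv w) = f (raag_gen V E v2))
       \<and> (\<exists>x \<in> words V. \<exists>y \<in> words V.
            raag_class V E x \<in> generate (RAAG V E) (raag_gen V E ` lk V E v1) \<and>
            raag_class V E y \<in> generate (RAAG V E) (raag_gen V E ` st V E v2) \<and>
            reduced V E (x @ y @ [(v3, True)] @ word_inv y @ word_inv x) \<and>
            raag_class V E (x @ y @ [(v3, True)] @ word_inv y @ word_inv x) = f (raag_gen V E v3))"
proof -
  note sg = assms(1) and v1V = assms(2) and v2V = assms(3) and v3V = assms(4)
    and e12 = assms(5) and e23 = assms(6) and ca = assms(8) and f1 = assms(9)
  interpret rg E using sg_rg[OF sg] .
  have EV: "E a b \<Longrightarrow> a \<in> V \<and> b \<in> V" for a b using sg unfolding simplicial_graph_def by blast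
  have hom: "f \<in> hom (RAAG V E) (RAAG V E)" using ca unfolding conjugating_aut_def iso_def by blast
  let ?G = "RAAG V E"
  let ?c = "raag_class V E"
  have gen_car: "raag_gen V E v \<in> carrier ?G" if "v \<in> V" for v
    using that by (simp add: gen_class class_in_carrier)
  have gen_comm: "f (raag_gen V E a) \<otimes>\<^bsub>?G\<^esub> f (raag_gen V E b) = f (raag_gen V E b) \<otimes>\<^bsub>?G\<^esub> f (raag_gen V E a)"
    if "E a b" for a b
  proof -
    have ab: "a \<in> V" "b \<in> V" using EV[OF that] by auto
    have "eqv E [(a,True),(b,True)] [(b,True),(a,True)]"
      using raag_step.commute[of E a b "[]" True True "[]"] that by auto
    then have "?c ([(a,True)] @ [(b,True)]) = ?c ([(b,True)] @ [(a,True)])"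
      using ab by (subst class_eq) auto
    then have "raag_gen V E a \<otimes>\<^bsub>?G\<^esub> raag_gen V E b = raag_gen V E b \<otimes>\<^bsub>?G\<^esub> raag_gen V E a"
      using ab by (simp add: gen_class mult_class)
    then show ?thesis using hom_mult[OF hom gen_car[OF ab(1)] gen_car[OF ab(2)]]
        hom_mult[OF hom gen_car[OF ab(2)] gen_car[OF ab(1)]] by simp
  qed
  have lkV: "lk V E v1 \<subseteq> V" by (auto simp: lk_def)
  have stV: "st V E v2 \<subseteq> V" using v2V by (auto simp: st_def lk_def)
  have wordsE: "w \<in> words V" if "\<forall>x\<in>set w. E a (fst x)" for w a
    using that EV by (auto simp: words_iff)

  obtain g2 where g2: "g2 \<in> words V" and fg2: "f (raag_gen V E v2) = ?c (g2 @ [(v2,True)] @ word_inv g2)"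
    using conj_word[OF ca v2V] by blast
  obtain u where u: "subseq u g2" "irr E (u @ [(v2,True)] @ word_inv u)"
    "eqv E (g2 @ [(v2,True)] @ word_inv g2) (u @ [(v2,True)] @ word_inv u)"
    using conj_norm[of u v2] conj_norm by blast
  define W2 where "W2 = u @ [(v2,True)] @ word_inv u"
  have uV: "u \<in> words V" using subseq_set[OF u(1)] g2 by (auto simp: words_iff)
  have W2V: "W2 \<in> words V" using uV v2V by (simp add: W2_def)
  have fW2: "f (raag_gen V E v2) = ?c W2"
    unfolding fg2 W2_def using g2 uV v2V u(3) by (subst class_eq) auto
  have fv1: "f (raag_gen V E v1) = ?c [(v1,True)]" using f1 by (simp add: gen_class)
  have "?c ([(v1,True)] @ W2) = ?c (W2 @ [(v1,True)])"
    using gen_comm[OF e12] unfolding fv1 fW2 using v1V W2V by (simp add: mult_class)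
  then have comm12: "eqv E ([(v1,True)] @ W2) (W2 @ [(v1,True)])"
    using v1V W2V by (subst (asm) class_eq) auto
  have ulk: "\<forall>x\<in>set u. E v1 (fst x)" using cent[OF u(2)[folded W2_def] W2_def comm12] .
  have part1: "\<exists>w \<in> words V.
            raag_class V E w \<in> generate (RAAG V E) (raag_gen V E ` lk V E v1) \<and>
            reduced V E (w @ [(v2, True)] @ word_inv w) \<and>
            raag_class V E (w @ [(v2, True)] @ word_inv w) = f (raag_gen V E v2)"
  proof (intro bexI conjI)
    show "u \<in> words V" by (rule uV)
    show "?c u \<in> generate ?G (raag_gen V E ` lk V E v1)"
      by (rule class_in_generate[OF _ lkV]) (use ulk EV in \<open>auto simp: lk_def\<close>)
    show "reduced V E (u @ [(v2, True)] @ word_inv u)"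
      using irr_reduced[OF W2V[unfolded W2_def] u(2)] .
    show "?c (u @ [(v2, True)] @ word_inv u) = f (raag_gen V E v2)" using fW2 W2_def by simp
  qed

  obtain g3 where g3: "g3 \<in> words V" and fg3: "f (raag_gen V E v3) = ?c (g3 @ [(v3,True)] @ word_inv g3)"
    using conj_word[OF ca v3V] by blast
  define W3 where "W3 = g3 @ [(v3,True)] @ word_inv g3"
  have W3V: "W3 \<in> words V" using g3 v3V by (simp add: W3_def)
  have "?c (W2 @ W3) = ?c (W3 @ W2)"
    using gen_comm[OF e23] unfolding fW2 fg3 W3_def[symmetric] using W2V W3V by (simp add: mult_class)
  then have comm23: "eqv E (W2 @ W3) (W3 @ W2)"
    using W2V W3V by (subst (asm) class_eq) auto
  define h where "h = word_inv u @ g3"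
  define Y where "Y = h @ [(v3,True)] @ word_inv h"
  have Yd: "Y = word_inv u @ W3 @ u" unfolding Y_def h_def W3_def by simp
  have L1: "eqv E ([(v2,True)] @ Y) (word_inv u @ W2 @ W3 @ u)"
  proof -
    have eq: "[] @ (word_inv u @ u) @ ([(v2,True)] @ Y) = word_inv u @ W2 @ W3 @ u"
      unfolding Yd W2_def by simp
    have "eqv E ([] @ [] @ ([(v2,True)] @ Y)) ([] @ (word_inv u @ u) @ ([(v2,True)] @ Y))"
      by (rule equivclp_sym[OF eqv_append[OF eqv_inv_l]])
    then show ?thesis unfolding eq by simp
  qed
  have L2: "eqv E (word_inv u @ (W2 @ W3) @ u) (word_inv u @ (W3 @ W2) @ u)"
    by (rule eqv_append[OF comm23])
  have L3: "eqv E (word_inv u @ W3 @ W2 @ u) (Y @ [(v2,True)])"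
  proof -
    have "eqv E ((word_inv u @ W3 @ u @ [(v2,True)]) @ (word_inv u @ u) @ []) ((word_inv u @ W3 @ u @ [(v2,True)]) @ [] @ [])"
      by (rule eqv_append[OF eqv_inv_l])
    then show ?thesis unfolding Yd W2_def by simp
  qed
  have commY: "eqv E ([(v2,True)] @ Y) (Y @ [(v2,True)])"
  proof -
    have L2': "eqv E (word_inv u @ W2 @ W3 @ u) (word_inv u @ W3 @ W2 @ u)" using L2 by simp
    show ?thesis by (rule equivclp_trans[OF equivclp_trans[OF L1 L2'] L3])
  qed
  obtain u3 where u3: "subseq u3 h" "irr E (u3 @ [(v3,True)] @ word_inv u3)"
    "eqv E (h @ [(v3,True)] @ word_inv h) (u3 @ [(v3,True)] @ word_inv u3)"
    using conj_norm by blast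
  define Y3 where "Y3 = u3 @ [(v3,True)] @ word_inv u3"
  have YY3: "eqv E Y Y3" using u3(3) unfolding Y_def Y3_def .
  have commY3: "eqv E ([(v2,True)] @ Y3) (Y3 @ [(v2,True)])"
  proof -
    have "eqv E ([(v2,True)] @ Y3) ([(v2,True)] @ Y)"
      using equivclp_sym[OF eqv_append[OF YY3, of "[(v2,True)]" "[]"]] by simp
    also have "eqv E \<dots> (Y @ [(v2,True)])" by (rule commY)
    also have "eqv E \<dots> (Y3 @ [(v2,True)])" using eqv_append[OF YY3, of "[]" "[(v2,True)]"] by simp
    finally show ?thesis .
  qed
  have u3lk: "\<forall>x\<in>set u3. E v2 (fst x)" using cent[OF u3(2)[folded Y3_def] Y3_def commY3] .
  have W3eq: "eqv E W3 ((u @ u3) @ [(v3,True)] @ word_inv (u @ u3))"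
  proof -
    have e1: "eqv E ([] @ (u @ word_inv u) @ (W3 @ u @ word_inv u)) ([] @ [] @ (W3 @ u @ word_inv u))"
      by (rule eqv_append[OF eqv_inv_r])
    have e2: "eqv E (W3 @ (u @ word_inv u) @ []) (W3 @ [] @ [])"
      by (rule eqv_append[OF eqv_inv_r])
    have eq1: "[] @ (u @ word_inv u) @ (W3 @ u @ word_inv u) = u @ Y @ word_inv u"
      unfolding Yd by simp
    have "eqv E (u @ Y @ word_inv u) W3"
      using equivclp_trans[OF e1[simplified] e2[simplified]] unfolding Yd by simp
    moreover have "eqv E (u @ Y @ word_inv u) (u @ Y3 @ word_inv u)" by (rule eqv_append[OF YY3])
    ultimately have "eqv E W3 (u @ Y3 @ word_inv u)" by (rule equivclp_trans[OF equivclp_sym])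
    moreover have "u @ Y3 @ word_inv u = (u @ u3) @ [(v3,True)] @ word_inv (u @ u3)"
      unfolding Y3_def by simp
    ultimately show ?thesis by simp
  qed
  obtain u4 where u4: "subseq u4 (u @ u3)" "irr E (u4 @ [(v3,True)] @ word_inv u4)"
    "eqv E ((u @ u3) @ [(v3,True)] @ word_inv (u @ u3)) (u4 @ [(v3,True)] @ word_inv u4)"
    using conj_norm by blast
  obtain x y where xy: "u4 = x @ y" "subseq x u" "subseq y u3" using u4(1) by (rule subseq_appendE)
  have xlk: "\<forall>z\<in>set x. E v1 (fst z)" using subseq_set[OF xy(2)] ulk by blast
  have ylk: "\<forall>z\<in>set y. E v2 (fst z)" using subseq_set[OF xy(3)] u3lk by blast
  have xV: "x \<in> words V" using wordsE[OF xlk] .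
  have yV: "y \<in> words V" using wordsE[OF ylk] .
  have fin: "x @ y @ [(v3, True)] @ word_inv y @ word_inv x = u4 @ [(v3,True)] @ word_inv u4"
    using xy(1) by simp
  have finV: "u4 @ [(v3,True)] @ word_inv u4 \<in> words V" using xV yV xy(1) v3V by simp
  have part2: "\<exists>x \<in> words V. \<exists>y \<in> words V.
            raag_class V E x \<in> generate (RAAG V E) (raag_gen V E ` lk V E v1) \<and>
            raag_class V E y \<in> generate (RAAG V E) (raag_gen V E ` st V E v2) \<and>
            reduced V E (x @ y @ [(v3, True)] @ word_inv y @ word_inv x) \<and>
            raag_class V E (x @ y @ [(v3, True)] @ word_inv y @ word_inv x) = f (raag_gen V E v3)"
  proof (rule bexI[of _ x], rule bexI[of _ y], intro conjI)
    show "x \<in> words V" "y \<in> words V" by (rule xV, rule yV)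
    show "?c x \<in> generate ?G (raag_gen V E ` lk V E v1)"
      by (rule class_in_generate[OF _ lkV]) (use xlk EV in \<open>auto simp: lk_def\<close>)
    show "?c y \<in> generate ?G (raag_gen V E ` st V E v2)"
      by (rule class_in_generate[OF _ stV]) (use ylk EV in \<open>auto simp: st_def lk_def\<close>)
    show "reduced V E (x @ y @ [(v3, True)] @ word_inv y @ word_inv x)"
      unfolding fin by (rule irr_reduced[OF finV u4(2)])
    have "eqv E W3 (u4 @ [(v3,True)] @ word_inv u4)" using equivclp_trans[OF W3eq u4(3)] .
    then have "?c W3 = ?c (u4 @ [(v3,True)] @ word_inv u4)" using W3V finV by (subst class_eq) auto
    then show "?c (x @ y @ [(v3, True)] @ word_inv y @ word_inv x) = f (raag_gen V E v3)"
      unfolding fin fg3 W3_def[symmetric] by simp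
  qed
  show ?thesis using part1 part2 by blast
qed

end
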